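(* Let $T$ be a tree with a proper 2-coloring $\chi:V(T)\to\{\mathcal{R},\mathcal{B}\}$. Then $T$ is unmixed if and only if every connected component $T'$ of $T_\mathcal{B}$ and of $T_\mathcal{R}$ satisfies: (1) $\mathrm{height}(T')\le 3$; (2) for all $v\in V_2(T')$, $|N_{T'}(v)\cap V_1(T')|=1$; and (3) for all $v\in V_1(T')$, $|N_{T'}(v)\cap V_2(T')|\le 1$.
   Context: $N_G(v)=\{u: uv\in E(G)\}$, $N(D)=\bigcup_{v\in D}N(v)$, $N[U]=N(U)\cup U$. A TD-set of $G$ is $D\subseteq V(G)$ with $N(D)=V(G)$; minimal if no proper subset is a TD-set; $G$ is unmixed if all its minimal TD-sets have the same size. A leaf is a vertex of degree 1, a support vertex is one adjacent to a leaf. The height of a vertex of a graph is its minimum distance to a leaf of that graph (isolated vertices have height 0); $V_k(G)$ is the set of vertices of height $k$, and $\mathrm{height}(G)=\max\{k: V_k(G)\ne\emptyset\}$. The blue interior graph $T_\mathcal{B}$ is the subgraph of $T$ induced on $V(T)\setminus N[V_1(T)\cap\chi^{-1}(\mathcal{B})]$; the red interior graph $T_\mathcal{R}$ is the subgraph induced on $V(T)\setminus N[V_1(T)\cap\chi^{-1}(\mathcal{R})]$. *)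

theory Defs
  imports Main
begin

datatype color = Red | Blue

definition simple_graph :: "'a set \<Rightarrow> ('a \<Rightarrow> 'a \<Rightarrow> bool) \<Rightarrow> bool" where
  "simple_graph V E \<longleftrightarrow> (\<forall>u v. E u v \<longrightarrow> u \<in> V \<and> v \<in> V \<and> u \<noteq> v \<and> E v u)"

definition induced :: "('a \<Rightarrow> 'a \<Rightarrow> bool) \<Rightarrow> 'a set \<Rightarrow> 'a \<Rightarrow> 'a \<Rightarrow> bool" where
  "induced E S = (\<lambda>u v. E u v \<and> u \<in> S \<and> v \<in> S)"

definition graph_connected :: "'a set \<Rightarrow> ('a \<Rightarrow> 'a \<Rightarrow> bool) \<Rightarrow> bool" where
  "graph_connected V E \<longleftrightarrow> (\<forall>u\<in>V. \<forall>v\<in>V. E\<^sup>*\<^sup>* u v)"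

definition is_cycle :: "'a set \<Rightarrow> ('a \<Rightarrow> 'a \<Rightarrow> bool) \<Rightarrow> 'a list \<Rightarrow> bool" where
  "is_cycle V E xs \<longleftrightarrow> length xs \<ge> 3 \<and> distinct xs \<and> set xs \<subseteq> V
     \<and> (\<forall>i. Suc i < length xs \<longrightarrow> E (xs ! i) (xs ! Suc i)) \<and> E (last xs) (hd xs)"

definition tree :: "'a set \<Rightarrow> ('a \<Rightarrow> 'a \<Rightarrow> bool) \<Rightarrow> bool" where
  "tree V E \<longleftrightarrow> finite V \<and> V \<noteq> {} \<and> simple_graph V E \<and> graph_connected V E
     \<and> (\<nexists>xs. is_cycle V E xs)"

definition proper_2_coloring :: "'a set \<Rightarrow> ('a \<Rightarrow> 'a \<Rightarrow> bool) \<Rightarrow> ('a \<Rightarrow> color) \<Rightarrow> bool" where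
  "proper_2_coloring V E \<chi> \<longleftrightarrow> (\<forall>u v. E u v \<longrightarrow> \<chi> u \<noteq> \<chi> v)"

definition nbhd :: "('a \<Rightarrow> 'a \<Rightarrow> bool) \<Rightarrow> 'a \<Rightarrow> 'a set" where
  "nbhd E v = {u. E u v}"

definition nbhd_set :: "('a \<Rightarrow> 'a \<Rightarrow> bool) \<Rightarrow> 'a set \<Rightarrow> 'a set" where
  "nbhd_set E D = (\<Union>v\<in>D. nbhd E v)"

definition closed_nbhd_set :: "('a \<Rightarrow> 'a \<Rightarrow> bool) \<Rightarrow> 'a set \<Rightarrow> 'a set" where
  "closed_nbhd_set E U = nbhd_set E U \<union> U"

definition is_TD_set :: "'a set \<Rightarrow> ('a \<Rightarrow> 'a \<Rightarrow> bool) \<Rightarrow> 'a set \<Rightarrow> bool" where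
  "is_TD_set V E D \<longleftrightarrow> D \<subseteq> V \<and> nbhd_set E D = V"

definition minimal_TD_set :: "'a set \<Rightarrow> ('a \<Rightarrow> 'a \<Rightarrow> bool) \<Rightarrow> 'a set \<Rightarrow> bool" where
  "minimal_TD_set V E D \<longleftrightarrow> is_TD_set V E D \<and> (\<forall>D'. D' \<subset> D \<longrightarrow> \<not> is_TD_set V E D')"

definition unmixed :: "'a set \<Rightarrow> ('a \<Rightarrow> 'a \<Rightarrow> bool) \<Rightarrow> bool" where
  "unmixed V E \<longleftrightarrow> (\<forall>D1 D2. minimal_TD_set V E D1 \<longrightarrow> minimal_TD_set V E D2 \<longrightarrow> card D1 = card D2)"

definition leaf :: "'a set \<Rightarrow> ('a \<Rightarrow> 'a \<Rightarrow> bool) \<Rightarrow> 'a \<Rightarrow> bool" where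
  "leaf V E v \<longleftrightarrow> v \<in> V \<and> card (nbhd E v) = 1"

definition vheight :: "'a set \<Rightarrow> ('a \<Rightarrow> 'a \<Rightarrow> bool) \<Rightarrow> 'a \<Rightarrow> nat" where
  "vheight V E v = (if nbhd E v = {} then 0 else (LEAST k. \<exists>u. leaf V E u \<and> (E ^^ k) v u))"

definition Vk :: "'a set \<Rightarrow> ('a \<Rightarrow> 'a \<Rightarrow> bool) \<Rightarrow> nat \<Rightarrow> 'a set" where
  "Vk V E k = {v \<in> V. vheight V E v = k}"

definition gheight :: "'a set \<Rightarrow> ('a \<Rightarrow> 'a \<Rightarrow> bool) \<Rightarrow> nat" where
  "gheight V E = Max {k. Vk V E k \<noteq> {}}"

definition components :: "'a set \<Rightarrow> ('a \<Rightarrow> 'a \<Rightarrow> bool) \<Rightarrow> 'a set set" where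
  "components V E = {{u \<in> V. (induced E V)\<^sup>*\<^sup>* v u} | v. v \<in> V}"

definition interior_set :: "'a set \<Rightarrow> ('a \<Rightarrow> 'a \<Rightarrow> bool) \<Rightarrow> ('a \<Rightarrow> color) \<Rightarrow> color \<Rightarrow> 'a set" where
  "interior_set V E \<chi> c = V - closed_nbhd_set E (Vk V E 1 \<inter> {v. \<chi> v = c})"

end

theory Submission
  imports Defs
begin
fun wk :: "('a \<Rightarrow> 'a \<Rightarrow> bool) \<Rightarrow> 'a list \<Rightarrow> bool" where
  "wk G (x # y # r) = (G x y \<and> wk G (y # r))"
| "wk G _ = True"

lemma wk_nth: "wk G xs \<longleftrightarrow> (\<forall>i. Suc i < length xs \<longrightarrow> G (xs ! i) (xs ! Suc i))"
proof (induction G xs rule: wk.induct)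
  case (1 G x y r)
  show ?case
  proof
    assume h: "wk G (x # y # r)"
    show "\<forall>i. Suc i < length (x # y # r) \<longrightarrow> G ((x # y # r) ! i) ((x # y # r) ! Suc i)"
    proof (intro allI impI)
      fix i assume "Suc i < length (x # y # r)"
      then show "G ((x # y # r) ! i) ((x # y # r) ! Suc i)"
        using h 1 by (cases i) auto
    qed
  next
    assume h: "\<forall>i. Suc i < length (x # y # r) \<longrightarrow> G ((x # y # r) ! i) ((x # y # r) ! Suc i)"
    have "G x y" using h[rule_format, of 0] by simp
    moreover have "\<forall>i. Suc i < length (y # r) \<longrightarrow> G ((y # r) ! i) ((y # r) ! Suc i)"
      using h by (metis Suc_less_eq length_Cons nth_Cons_Suc)
    ultimately show "wk G (x # y # r)" using 1 by simp
  qed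
qed auto

lemma wk_append: "wk G (xs @ y # ys) \<longleftrightarrow> wk G (xs @ [y]) \<and> wk G (y # ys)"
proof (induction xs)
  case Nil then show ?case by simp
next
  case (Cons a xs)
  then show ?case by (cases xs) auto
qed

lemma wk_snoc: "xs \<noteq> [] \<Longrightarrow> wk G (xs @ [y]) \<longleftrightarrow> wk G xs \<and> G (last xs) y"
proof (induction xs)
  case Nil then show ?case by simp
next
  case (Cons a xs)
  then show ?case by (cases xs) auto
qed

lemma wk_mono: "wk G xs \<Longrightarrow> (\<And>a b. G a b \<Longrightarrow> H a b) \<Longrightarrow> wk H xs"
  by (induction G xs rule: wk.induct) auto

lemma wk_relpow: "wk G xs \<Longrightarrow> xs \<noteq> [] \<Longrightarrow> (G ^^ (length xs - 1)) (hd xs) (last xs)"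
proof (induction G xs rule: wk.induct)
  case (1 G x y r)
  then have "(G ^^ (length (y # r) - 1)) y (last (y # r))" by simp
  then have "(G ^^ Suc (length (y # r) - 1)) x (last (y # r))"
    using 1 by (intro relpowp_Suc_I2) auto
  then show ?case by simp
qed auto

lemma rtranclp_wk: "G\<^sup>*\<^sup>* a b \<Longrightarrow> \<exists>xs. wk G xs \<and> xs \<noteq> [] \<and> hd xs = a \<and> last xs = b"
proof (induction rule: rtranclp_induct)
  case base
  then show ?case by (intro exI[of _ "[a]"]) auto
next
  case (step y z)
  then obtain xs where xs: "wk G xs" "xs \<noteq> []" "hd xs = a" "last xs = y" by blast
  then have "wk G (xs @ [z])" using step by (simp add: wk_snoc)
  then show ?case using xs by (intro exI[of _ "xs @ [z]"]) auto
qed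

lemma wk_rtranclp: "wk G xs \<Longrightarrow> xs \<noteq> [] \<Longrightarrow> G\<^sup>*\<^sup>* (hd xs) (last xs)"
  using wk_relpow relpowp_imp_rtranclp by metis

lemma wk_distinct:
  assumes "wk G xs" "xs \<noteq> []"
  shows "\<exists>ys. wk G ys \<and> ys \<noteq> [] \<and> hd ys = hd xs \<and> last ys = last xs \<and> distinct ys \<and> set ys \<subseteq> set xs"
  using assms
proof (induction "length xs" arbitrary: xs rule: less_induct)
  case less
  show ?case
  proof (cases "distinct xs")
    case True then show ?thesis using less by blast
  next
    case False
    then obtain as y bs cs where xs: "xs = as @ [y] @ bs @ [y] @ cs"
      using not_distinct_decomp by blast
    let ?zs = "as @ [y] @ cs"
    have "wk G (as @ y # (bs @ [y] @ cs))" using less(2) xs by simp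
    then have w1: "wk G (as @ [y])" and w2: "wk G ((y # bs) @ y # cs)"
      using wk_append[of G as y "bs @ [y] @ cs"] by auto
    have "wk G (y # cs)" using w2 wk_append[of G "y # bs" y cs] by blast
    then have w: "wk G ?zs" using w1 wk_append[of G as y cs] by simp
    have "length ?zs < length xs" unfolding xs by simp
    then obtain ys where ys: "wk G ys" "ys \<noteq> []" "hd ys = hd ?zs" "last ys = last ?zs"
      "distinct ys" "set ys \<subseteq> set ?zs" using less(1) w by blast
    have "hd ?zs = hd xs" unfolding xs by (cases as) auto
    moreover have "last ?zs = last xs" unfolding xs by (cases cs) auto
    moreover have "set ?zs \<subseteq> set xs" unfolding xs by auto
    ultimately show ?thesis using ys by auto
  qed
qed

lemma tree_simple: "tree V E \<Longrightarrow> simple_graph V E" by (simp add: tree_def)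
lemma tree_finite: "tree V E \<Longrightarrow> finite V" by (simp add: tree_def)

lemma sg_sym: "simple_graph V E \<Longrightarrow> E u v \<Longrightarrow> E v u" by (simp add: simple_graph_def)
lemma sg_V1: "simple_graph V E \<Longrightarrow> E u v \<Longrightarrow> u \<in> V" by (simp add: simple_graph_def)
lemma sg_V2: "simple_graph V E \<Longrightarrow> E u v \<Longrightarrow> v \<in> V" by (simp add: simple_graph_def)
lemma sg_irr: "simple_graph V E \<Longrightarrow> E u v \<Longrightarrow> u \<noteq> v" by (simp add: simple_graph_def)

lemma wk_setV: "simple_graph V E \<Longrightarrow> wk E xs \<Longrightarrow> 2 \<le> length xs \<Longrightarrow> set xs \<subseteq> V"
proof (induction E xs rule: wk.induct)
  case (1 G x y r)
  then show ?case
    by (cases r) (auto dest: sg_V1 sg_V2)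
qed auto

lemma len2: "xs \<noteq> [] \<Longrightarrow> hd xs \<noteq> last xs \<Longrightarrow> 2 \<le> length xs"
  by (cases xs; cases "tl xs") auto

lemma TLw:
  assumes T: "tree V E" and w: "wk E xs" and ne: "xs \<noteq> []" and hl: "hd xs \<noteq> last xs"
    and x: "x \<notin> set xs" and e1: "E x (hd xs)" and e2: "E x (last xs)"
  shows False
proof -
  have sg: "simple_graph V E" using T by (rule tree_simple)
  obtain ys where ys: "wk E ys" "ys \<noteq> []" "hd ys = hd xs" "last ys = last xs" "distinct ys"
    "set ys \<subseteq> set xs" using wk_distinct[OF w ne] by blast
  have len: "2 \<le> length ys" using len2 ys hl by metis
  let ?cs = "x # ys"
  have "wk E ?cs" using ys e1 by (cases ys) auto
  then have "set ?cs \<subseteq> V" using wk_setV[OF sg, of ?cs] len by simp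
  moreover have "distinct ?cs" using ys x by auto
  moreover have "E (last ?cs) (hd ?cs)" using ys e2 sg_sym[OF sg] by auto
  moreover have "3 \<le> length ?cs" using len by simp
  moreover have "\<forall>i. Suc i < length ?cs \<longrightarrow> E (?cs ! i) (?cs ! Suc i)"
    using \<open>wk E ?cs\<close> wk_nth by blast
  ultimately have "is_cycle V E ?cs" unfolding is_cycle_def by blast
  then show False using T unfolding tree_def by blast
qed

lemma induced_E: "induced E S u v \<Longrightarrow> E u v" by (simp add: induced_def)

lemma wk_induced_set: "wk (induced E S) xs \<Longrightarrow> 2 \<le> length xs \<Longrightarrow> set xs \<subseteq> S"
proof (induction "induced E S" xs rule: wk.induct)
  case (1 x y r)
  then show ?case by (cases r) (auto simp: induced_def)
qed auto

lemma TL: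
  assumes T: "tree V E" and conn: "\<forall>a\<in>S. (induced E S)\<^sup>*\<^sup>* s0 a"
    and a: "a \<in> S" and b: "b \<in> S" and ab: "a \<noteq> b" and x: "x \<notin> S"
    and e1: "E x a" and e2: "E x b"
  shows False
proof -
  have sg: "simple_graph V E" using T by (rule tree_simple)
  have sym: "induced E S u v \<Longrightarrow> induced E S v u" for u v
    using sg_sym[OF sg] by (auto simp: induced_def)
  have "(induced E S)\<^sup>*\<^sup>* s0 a" using conn a by blast
  then have "(induced E S)\<^sup>*\<^sup>* a s0"
    by (induction rule: rtranclp_induct) (auto intro: converse_rtranclp_into_rtranclp sym)
  moreover have "(induced E S)\<^sup>*\<^sup>* s0 b" using conn b by blast
  ultimately have "(induced E S)\<^sup>*\<^sup>* a b" by simp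
  then obtain xs where xs: "wk (induced E S) xs" "xs \<noteq> []" "hd xs = a" "last xs = b"
    using rtranclp_wk by metis
  have "2 \<le> length xs" using len2 xs ab by metis
  then have "set xs \<subseteq> S" using wk_induced_set xs(1) by blast
  then have "x \<notin> set xs" using x by blast
  moreover have "wk E xs" using xs(1) by (rule wk_mono) (rule induced_E)
  ultimately show False using TLw[OF T _ xs(2)] xs ab e1 e2 by auto
qed

lemma induced_sym: "simple_graph V E \<Longrightarrow> induced E C u v \<Longrightarrow> induced E C v u"
  by (auto simp: induced_def dest: sg_sym)

lemma induced_irr: "simple_graph V E \<Longrightarrow> induced E C u v \<Longrightarrow> u \<noteq> v"
  by (auto simp: induced_def dest: sg_irr)

lemma induced_in: "induced E C u v \<Longrightarrow> u \<in> C \<and> v \<in> C"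
  by (auto simp: induced_def)

lemma induced_V: "simple_graph V E \<Longrightarrow> induced E V = E"
  by (auto simp: induced_def fun_eq_iff dest: sg_V1 sg_V2)

lemma RL:
  assumes T: "tree V E" and CV: "C \<subseteq> V" and x: "x \<in> C" and ne: "nbhd (induced E C) x \<noteq> {}"
  shows "\<exists>k u. leaf C (induced E C) u \<and> ((induced E C) ^^ k) x u"
proof -
  let ?G = "induced E C"
  have sg: "simple_graph V E" using T by (rule tree_simple)
  have fC: "finite C" using tree_finite[OF T] CV finite_subset by blast
  have Gs: "?G a b \<Longrightarrow> ?G b a" for a b using induced_sym[OF sg] .
  have Gi: "?G a b \<Longrightarrow> a \<noteq> b" for a b using induced_irr[OF sg] .
  have GC: "?G a b \<Longrightarrow> a \<in> C \<and> b \<in> C" for a b using induced_in .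
  define P where "P = {xs. xs \<noteq> [] \<and> hd xs = x \<and> distinct xs \<and> set xs \<subseteq> C \<and> wk ?G xs}"
  have "P \<subseteq> {xs. set xs \<subseteq> C \<and> length xs \<le> card C}"
  proof
    fix xs assume "xs \<in> P"
    then have "distinct xs" "set xs \<subseteq> C" unfolding P_def by auto
    then show "xs \<in> {xs. set xs \<subseteq> C \<and> length xs \<le> card C}"
      using distinct_card[of xs] card_mono[OF fC, of "set xs"] by simp
  qed
  then have fP: "finite P" using finite_lists_length_le[OF fC] finite_subset by blast
  have "[x] \<in> P" unfolding P_def using x by simp
  then have neP: "length ` P \<noteq> {}" by blast
  obtain xs where xsP: "xs \<in> P" and xsmax: "\<And>ys. ys \<in> P \<Longrightarrow> length ys \<le> length xs"
  proof -
    have "Max (length ` P) \<in> length ` P" using Max_in fP neP by blast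
    then obtain xs where "xs \<in> P" "Max (length ` P) = length xs" by (rule imageE)
    moreover have "\<And>ys. ys \<in> P \<Longrightarrow> length ys \<le> Max (length ` P)" using fP by simp
    ultimately show ?thesis using that by (metis (no_types, lifting))
  qed
  have xs: "xs \<noteq> []" "hd xs = x" "distinct xs" "set xs \<subseteq> C" "wk ?G xs"
    using xsP unfolding P_def by auto
  obtain n where n: "?G n x" using ne unfolding nbhd_def by blast
  have ext: "\<And>m. ?G (last xs) m \<Longrightarrow> m \<in> set xs"
  proof (rule ccontr)
    fix m assume m: "?G (last xs) m" "m \<notin> set xs"
    have "xs @ [m] \<in> P" unfolding P_def using xs m GC wk_snoc[of xs ?G m] by auto
    then show False using xsmax[of "xs @ [m]"] by simp
  qed
  have "2 \<le> length xs"
  proof (rule ccontr)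
    assume "\<not> 2 \<le> length xs"
    then have "xs = [x]" using xs(1,2) by (cases xs; cases "tl xs") auto
    then have "n \<in> set xs" using ext Gs n by simp
    then show False using \<open>xs = [x]\<close> Gi n by simp
  qed
  then have b1: "butlast xs \<noteq> []" by (cases xs; cases "tl xs") auto
  have "xs = butlast (butlast xs) @ [last (butlast xs), last xs]"
    using b1 xs(1) append_butlast_last_id[of xs] append_butlast_last_id[of "butlast xs"]
    by (metis append.assoc append_Cons append_Nil)
  then obtain zs p u where xsd: "xs = zs @ [p, u]" by blast
  have "wk ?G (zs @ p # [u])" using xs(5) xsd by simp
  then have pu: "?G p u" using wk_append[of ?G zs p "[u]"] by simp
  have lu: "last xs = u" using xsd by simp
  have nb: "nbhd ?G u = {p}"
  proof
    show "{p} \<subseteq> nbhd ?G u" using pu by (simp add: nbhd_def)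
  next
    show "nbhd ?G u \<subseteq> {p}"
    proof
      fix m assume "m \<in> nbhd ?G u"
      then have mu: "?G m u" by (simp add: nbhd_def)
      then have "m \<in> set xs" using ext Gs lu by blast
      moreover have "m \<noteq> u" using Gi mu by blast
      ultimately have "m \<in> set zs \<or> m = p" using xsd by auto
      then show "m \<in> {p}"
      proof
        assume "m \<in> set zs"
        then obtain pre mid where zsd: "zs = pre @ m # mid" by (meson split_list)
        have "wk ?G (pre @ m # (mid @ [p, u]))" using xs(5) xsd zsd by simp
        then have "wk ?G (m # mid @ [p, u])" using wk_append[of ?G pre m "mid @ [p, u]"] by blast
        then have "wk ?G ((m # mid) @ p # [u])" by simp
        then have w: "wk ?G ((m # mid) @ [p])" using wk_append[of ?G "m # mid" p "[u]"] by blast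
        have dd: "distinct (pre @ m # mid @ [p, u])" using xs(3) xsd zsd by simp
        show "m \<in> {p}"
        proof (rule ccontr)
          assume "m \<notin> {p}"
          have "wk E ((m # mid) @ [p])" using w by (rule wk_mono) (rule induced_E)
          moreover have "u \<notin> set ((m # mid) @ [p])" using dd by auto
          moreover have "E u m" using mu Gs induced_E by metis
          moreover have "E u p" using pu Gs induced_E by metis
          ultimately show False using TLw[OF T, of "(m # mid) @ [p]" u] \<open>m \<notin> {p}\<close> by simp
        qed
      qed simp
    qed
  qed
  have "leaf C ?G u" unfolding leaf_def using nb xs(4) xsd by auto
  moreover have "(?G ^^ (length xs - 1)) x u" using wk_relpow[OF xs(5) xs(1)] xs(2) lu by simp
  ultimately show ?thesis by blast
qed

locale hg =
  fixes V E C
  assumes T: "tree V E" and CV: "C \<subseteq> V"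
begin

abbreviation "G \<equiv> induced E C"
abbreviation "h \<equiv> vheight C G"

lemma sg: "simple_graph V E" using T by (rule tree_simple)
lemma fC: "finite C" using tree_finite[OF T] CV finite_subset by blast
lemma Gs: "G a b \<Longrightarrow> G b a" using induced_sym[OF sg] .
lemma Gi: "G a b \<Longrightarrow> a \<noteq> b" using induced_irr[OF sg] .
lemma GC: "G a b \<Longrightarrow> a \<in> C \<and> b \<in> C" using induced_in .
lemma GE: "G a b \<Longrightarrow> E a b" by (rule induced_E)

lemma nb_ne: "G x y \<Longrightarrow> nbhd G x \<noteq> {}"
  using Gs by (auto simp: nbhd_def)

lemma fin_nb: "finite (nbhd G x)"
proof -
  have "nbhd G x \<subseteq> C" using GC by (auto simp: nbhd_def)
  then show ?thesis using fC finite_subset by blast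
qed

lemma h_iso: "nbhd G x = {} \<Longrightarrow> h x = 0"
  by (simp add: vheight_def)

lemma hI: assumes "x \<in> C" "nbhd G x \<noteq> {}"
  shows "\<exists>u. leaf C G u \<and> (G ^^ h x) x u"
proof -
  have "\<exists>k u. leaf C G u \<and> (G ^^ k) x u" using RL[OF T CV assms] .
  then have "\<exists>u. leaf C G u \<and> (G ^^ (LEAST k. \<exists>u. leaf C G u \<and> (G ^^ k) x u)) x u"
    by (rule LeastI_ex)
  then show ?thesis using assms by (simp add: vheight_def)
qed

lemma h_le: assumes "nbhd G x \<noteq> {}" "leaf C G u" "(G ^^ k) x u" shows "h x \<le> k"
proof -
  have "(LEAST k. \<exists>u. leaf C G u \<and> (G ^^ k) x u) \<le> k" using assms by (intro Least_le) blast
  then show ?thesis using assms by (simp add: vheight_def)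
qed

lemma leaf_ne: "leaf C G u \<Longrightarrow> nbhd G u \<noteq> {}"
  by (auto simp: leaf_def)

lemma h_leaf: "leaf C G x \<Longrightarrow> h x = 0"
  using h_le[of x x 0] leaf_ne by simp

lemma h0_leaf: assumes "x \<in> C" "nbhd G x \<noteq> {}" "h x = 0" shows "leaf C G x"
  using hI[OF assms(1,2)] assms(3) by auto

lemma h_lip: assumes "G x y" shows "h x \<le> Suc (h y)"
proof -
  have y: "y \<in> C" "nbhd G y \<noteq> {}" using assms GC Gs nb_ne by blast+
  obtain u where u: "leaf C G u" "(G ^^ h y) y u" using hI[OF y] by blast
  have "(G ^^ Suc (h y)) x u" using assms u(2) by (rule relpowp_Suc_I2)
  then show ?thesis using h_le[OF nb_ne[OF assms] u(1)] by blast
qed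

lemma h_step: assumes "x \<in> C" "h x = Suc k" shows "\<exists>y. G x y \<and> h y = k"
proof -
  have ne: "nbhd G x \<noteq> {}" using assms h_iso by fastforce
  obtain u where u: "leaf C G u" "(G ^^ Suc k) x u" using hI[OF assms(1) ne] assms(2) by auto
  then obtain y where y: "G x y" "(G ^^ k) y u" using relpowp_Suc_D2 by metis
  have "h y \<le> k" using h_le[OF nb_ne[OF Gs[OF y(1)]] u(1) y(2)] .
  moreover have "Suc k \<le> Suc (h y)" using h_lip[OF y(1)] assms(2) by simp
  ultimately show ?thesis using y(1) by auto
qed

lemma h1_intro: assumes "x \<in> C" "G x l" "leaf C G l" "\<not> leaf C G x" shows "h x = 1"
proof -
  have ne: "nbhd G x \<noteq> {}" using nb_ne assms(2) .
  have "(G ^^ Suc 0) x l" using relpowp_Suc_I2[of G x l 0 l] assms(2) by simp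
  then have "h x \<le> 1" using h_le[OF ne assms(3)] by simp
  moreover have "h x \<noteq> 0" using h0_leaf[OF assms(1) ne] assms(4) by blast
  ultimately show ?thesis by simp
qed

lemma h1_leafnb: assumes "x \<in> C" "h x = 1" shows "\<exists>l. G x l \<and> leaf C G l"
proof -
  obtain y where y: "G x y" "h y = 0" using h_step[OF assms(1)] assms(2) by auto
  have "leaf C G y" using h0_leaf[OF _ nb_ne[OF Gs[OF y(1)]] y(2)] GC y(1) by blast
  then show ?thesis using y by blast
qed

lemma h_other: assumes "x \<in> C" "h x \<noteq> 0" "G x z" shows "\<exists>u. G x u \<and> u \<noteq> z"
proof (rule ccontr)
  assume "\<not> (\<exists>u. G x u \<and> u \<noteq> z)"
  then have "\<And>u. G u x \<Longrightarrow> u = z" using Gs by blast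
  then have "nbhd G x = {z}" using Gs[OF assms(3)] unfolding nbhd_def by blast
  then have "leaf C G x" using assms(1) by (simp add: leaf_def)
  then show False using h_leaf assms(2) by simp
qed

lemma h_down: assumes "x \<in> C" "m \<le> h x" shows "\<exists>y\<in>C. h y = m"
  using assms
proof (induction "h x - m" arbitrary: x)
  case 0 then show ?case by force
next
  case (Suc d)
  obtain k where k: "h x = Suc k" using Suc(2) by (cases "h x") auto
  obtain y where y: "G x y" "h y = k" using h_step[OF Suc(3) k] by blast
  show ?case using Suc(1)[of y] y k Suc(2) GC by force
qed

lemma gheight_eq: "gheight C G = Max (h ` C)"
proof -
  have "{k. Vk C G k \<noteq> {}} = h ` C" by (auto simp: Vk_def)
  then show ?thesis by (simp add: gheight_def)
qed

lemma gheight_le: "C \<noteq> {} \<Longrightarrow> gheight C G \<le> n \<longleftrightarrow> (\<forall>x\<in>C. h x \<le> n)"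
  using gheight_eq fC by (simp add: Max_le_iff)

end

lemma color2: "(a::color) \<noteq> b \<Longrightarrow> c \<noteq> b \<Longrightarrow> a = c"
  by (cases a; cases b; cases c) auto

lemma relpow_parity:
  assumes alt: "\<And>a b. G a b \<Longrightarrow> \<chi> a \<noteq> (\<chi> b :: color)"
  shows "(G ^^ k) x u \<Longrightarrow> (\<chi> u = \<chi> x \<longleftrightarrow> even k)"
proof (induction k arbitrary: u)
  case 0 then show ?case by simp
next
  case (Suc k)
  obtain y where y: "(G ^^ k) x y" "G y u" using Suc(2) by (rule relpowp_Suc_E)
  have "\<chi> u \<noteq> \<chi> y" using alt y(2) by metis
  moreover have "\<chi> y = \<chi> x \<longleftrightarrow> even k" using Suc(1) y(1) .
  ultimately show ?case
  proof (cases "even k")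
    case True
    then show ?thesis using \<open>\<chi> u \<noteq> \<chi> y\<close> \<open>\<chi> y = \<chi> x \<longleftrightarrow> even k\<close> by simp
  next
    case False
    then have "\<chi> u = \<chi> x" using \<open>\<chi> u \<noteq> \<chi> y\<close> \<open>\<chi> y = \<chi> x \<longleftrightarrow> even k\<close>
      color2[of "\<chi> u" "\<chi> y" "\<chi> x"] by metis
    then show ?thesis using False by simp
  qed
qed

definition covers :: "'a set \<Rightarrow> ('a \<Rightarrow> 'a \<Rightarrow> bool) \<Rightarrow> ('a \<Rightarrow> color) \<Rightarrow> color \<Rightarrow> 'a set \<Rightarrow> bool" where
  "covers V E \<chi> c D \<longleftrightarrow> D \<subseteq> V \<and> (\<forall>d\<in>D. \<chi> d = c) \<and> (\<forall>r\<in>V. \<chi> r \<noteq> c \<longrightarrow> (\<exists>d\<in>D. E d r))"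

definition mincov :: "'a set \<Rightarrow> ('a \<Rightarrow> 'a \<Rightarrow> bool) \<Rightarrow> ('a \<Rightarrow> color) \<Rightarrow> color \<Rightarrow> 'a set \<Rightarrow> bool" where
  "mincov V E \<chi> c D \<longleftrightarrow> covers V E \<chi> c D \<and> (\<forall>D'. D' \<subset> D \<longrightarrow> \<not> covers V E \<chi> c D')"

definition unmix :: "'a set \<Rightarrow> ('a \<Rightarrow> 'a \<Rightarrow> bool) \<Rightarrow> ('a \<Rightarrow> color) \<Rightarrow> color \<Rightarrow> bool" where
  "unmix V E \<chi> c \<longleftrightarrow> (\<forall>D1 D2. mincov V E \<chi> c D1 \<longrightarrow> mincov V E \<chi> c D2 \<longrightarrow> card D1 = card D2)"

definition forced :: "'a set \<Rightarrow> ('a \<Rightarrow> 'a \<Rightarrow> bool) \<Rightarrow> ('a \<Rightarrow> color) \<Rightarrow> color \<Rightarrow> 'a set \<Rightarrow> 'a \<Rightarrow> bool" where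
  "forced V E \<chi> c X y \<longleftrightarrow> (\<exists>r\<in>V. \<chi> r \<noteq> c \<and> E y r \<and> (\<forall>x\<in>X. E x r \<longrightarrow> x = y))"

lemma mincov_exists:
  assumes fV: "finite V" and X: "covers V E \<chi> c X"
  shows "\<exists>D\<subseteq>X. mincov V E \<chi> c D"
proof -
  obtain D where D: "D \<subseteq> X \<and> covers V E \<chi> c D"
    and least: "\<And>D'. D' \<subseteq> X \<and> covers V E \<chi> c D' \<Longrightarrow> card D \<le> card D'"
    using ex_has_least_nat[of "\<lambda>D. D \<subseteq> X \<and> covers V E \<chi> c D" X card] X by blast
  have fD: "finite D" using D fV unfolding covers_def using finite_subset by blast
  have "mincov V E \<chi> c D"
    unfolding mincov_def
  proof (intro conjI allI impI)
    show "covers V E \<chi> c D" using D by blast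
  next
    fix D' assume "D' \<subset> D"
    then have "card D' < card D" using fD psubset_card_mono by blast
    then show "\<not> covers V E \<chi> c D'" using least[of D'] \<open>D' \<subset> D\<close> D by auto
  qed
  then show ?thesis using D by blast
qed

lemma mincov_private:
  assumes m: "mincov V E \<chi> c D" and d: "d \<in> D"
  shows "\<exists>r\<in>V. \<chi> r \<noteq> c \<and> E d r \<and> (\<forall>d'\<in>D. E d' r \<longrightarrow> d' = d)"
proof -
  have cov: "covers V E \<chi> c D" using m by (simp add: mincov_def)
  have "D - {d} \<subset> D" using d by blast
  then have "\<not> covers V E \<chi> c (D - {d})" using m by (simp add: mincov_def)
  moreover have "D - {d} \<subseteq> V" "\<forall>x\<in>D - {d}. \<chi> x = c" using cov by (auto simp: covers_def)
  ultimately obtain r where r: "r \<in> V" "\<chi> r \<noteq> c" "\<forall>x\<in>D - {d}. \<not> E x r"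
    unfolding covers_def by blast
  then obtain x where "x \<in> D" "E x r" using cov by (auto simp: covers_def)
  then show ?thesis using r by blast
qed

lemma forced_in:
  assumes "covers V E \<chi> c D" "D \<subseteq> X" "forced V E \<chi> c X y"
  shows "y \<in> D"
proof -
  obtain r where r: "r \<in> V" "\<chi> r \<noteq> c" "E y r" "\<forall>x\<in>X. E x r \<longrightarrow> x = y"
    using assms(3) by (auto simp: forced_def)
  then obtain d where "d \<in> D" "E d r" using assms(1) by (auto simp: covers_def)
  then show ?thesis using r assms(2) by blast
qed

lemma W:
  assumes fV: "finite V" and X: "covers V E \<chi> c X" and RX: "R \<subseteq> X"
    and Rf: "\<forall>x\<in>R. forced V E \<chi> c X x"
    and fA: "finite A" and AV: "A \<subseteq> V" and Ac: "\<forall>a\<in>A. \<chi> a = c"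
    and card: "card A < card R"
    and adj: "\<forall>r\<in>V. \<chi> r \<noteq> c \<longrightarrow> (\<forall>x\<in>R. E x r \<longrightarrow>
               (\<exists>a\<in>A. E a r) \<or> (\<exists>y\<in>X - R. forced V E \<chi> c X y \<and> E y r))"
  shows "\<not> unmix V E \<chi> c"
proof
  assume um: "unmix V E \<chi> c"
  obtain D where DX: "D \<subseteq> X" and D: "mincov V E \<chi> c D" using mincov_exists[OF fV X] by blast
  have Dc: "covers V E \<chi> c D" using D by (simp add: mincov_def)
  have fD: "finite D" using Dc fV finite_subset by (auto simp: covers_def)
  have RD: "R \<subseteq> D" using forced_in[OF Dc DX] Rf by blast
  let ?C = "(D - R) \<union> A"
  have "covers V E \<chi> c ?C"
    unfolding covers_def
  proof (intro conjI ballI impI)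
    show "?C \<subseteq> V" using Dc AV by (auto simp: covers_def)
  next
    fix x assume "x \<in> ?C" then show "\<chi> x = c" using Dc Ac by (auto simp: covers_def)
  next
    fix r assume r: "r \<in> V" "\<chi> r \<noteq> c"
    then obtain d where d: "d \<in> D" "E d r" using Dc by (auto simp: covers_def)
    show "\<exists>d\<in>?C. E d r"
    proof (cases "d \<in> R")
      case False then show ?thesis using d by blast
    next
      case True
      then have "(\<exists>a\<in>A. E a r) \<or> (\<exists>y\<in>X - R. forced V E \<chi> c X y \<and> E y r)"
        using adj r d by blast
      then show ?thesis
      proof
        assume "\<exists>a\<in>A. E a r" then show ?thesis by blast
      next
        assume "\<exists>y\<in>X - R. forced V E \<chi> c X y \<and> E y r"
        then obtain y where "y \<in> X - R" "forced V E \<chi> c X y" "E y r" by blast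
        then have "y \<in> D - R" using forced_in[OF Dc DX] by blast
        then show ?thesis using \<open>E y r\<close> by blast
      qed
    qed
  qed
  then have "\<exists>D2\<subseteq>?C. mincov V E \<chi> c D2" by (rule mincov_exists[OF fV])
  then obtain D2 where D2C: "D2 \<subseteq> ?C" and D2: "mincov V E \<chi> c D2" by blast
  have "card D2 \<le> card ?C" using D2C fD fA by (intro card_mono) auto
  also have "\<dots> \<le> card (D - R) + card A" by (rule card_Un_le)
  also have "card (D - R) = card D - card R" using RD fD by (simp add: card_Diff_subset finite_subset)
  finally have "card D2 < card D" using card card_mono[OF fD RD] by linarith
  moreover have "card D2 = card D" using um D D2 unfolding unmix_def by blast
  ultimately show False by simp
qed

locale tc =
  fixes V :: "'a set" and E :: "'a \<Rightarrow> 'a \<Rightarrow> bool" and \<chi> :: "'a \<Rightarrow> color" and c :: color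
  assumes T: "tree V E" and col: "proper_2_coloring V E \<chi>" and big: "3 \<le> card V"
begin

lemma sg: "simple_graph V E" using T by (rule tree_simple)
lemma fV: "finite V" using T by (rule tree_finite)
lemma Es: "E u v \<Longrightarrow> E v u" using sg_sym[OF sg] .
lemma Ei: "E u v \<Longrightarrow> u \<noteq> v" using sg_irr[OF sg] .
lemma EV1: "E u v \<Longrightarrow> u \<in> V" using sg_V1[OF sg] .
lemma EV2: "E u v \<Longrightarrow> v \<in> V" using sg_V2[OF sg] .
lemma conn: "u \<in> V \<Longrightarrow> v \<in> V \<Longrightarrow> E\<^sup>*\<^sup>* u v" using T by (simp add: tree_def graph_connected_def)
lemma prp: "E u v \<Longrightarrow> \<chi> u \<noteq> \<chi> v" using col by (simp add: proper_2_coloring_def)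
lemma colc: "E u v \<Longrightarrow> \<chi> u = c \<Longrightarrow> \<chi> v \<noteq> c" using prp by metis
lemma colc': "E u v \<Longrightarrow> \<chi> u \<noteq> c \<Longrightarrow> \<chi> v = c" using prp color2 by metis

definition F where "F = Vk V E 1 \<inter> {v. \<chi> v = c}"
definition I where "I = interior_set V E \<chi> c"

abbreviation "hT \<equiv> vheight V E"

interpretation hgV: hg V E V using T by unfold_locales auto

lemma hT1_leafnb: "x \<in> V \<Longrightarrow> hT x = 1 \<Longrightarrow> \<exists>l. E x l \<and> leaf V E l"
  using hgV.h1_leafnb by (simp add: induced_V[OF sg])

lemma hT1_intro: "x \<in> V \<Longrightarrow> E x l \<Longrightarrow> leaf V E l \<Longrightarrow> \<not> leaf V E x \<Longrightarrow> hT x = 1"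
  using hgV.h1_intro[of x l] by (simp add: induced_V[OF sg])

lemma nbr_ex: assumes "x \<in> V" shows "\<exists>y. E x y"
proof -
  have "\<not> V \<subseteq> {x}"
  proof
    assume "V \<subseteq> {x}"
    then have "card V \<le> card {x}" by (intro card_mono) auto
    then show False using big by simp
  qed
  then obtain z where z: "z \<in> V" "z \<noteq> x" by blast
  have "E\<^sup>*\<^sup>* x z" using conn assms z by blast
  then show ?thesis using z(2) by (cases rule: converse_rtranclpE) auto
qed

lemma nb_single: "card (nbhd E a) = 1 \<Longrightarrow> E b a \<Longrightarrow> nbhd E a = {b}"
proof -
  assume "card (nbhd E a) = 1" "E b a"
  then obtain z where z: "nbhd E a = {z}" by (meson card_1_singletonE)
  moreover have "b \<in> nbhd E a" using \<open>E b a\<close> by (simp add: nbhd_def)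
  ultimately show ?thesis by simp
qed

lemma two_leaves:
  assumes ab: "E a b" and la: "card (nbhd E a) = 1" and lb: "card (nbhd E b) = 1"
  shows False
proof -
  have na: "nbhd E a = {b}" using nb_single[OF la] Es[OF ab] .
  have nb: "nbhd E b = {a}" using nb_single[OF lb] ab .
  have "z \<in> {a, b}" if "z \<in> V" for z
  proof -
    have "E\<^sup>*\<^sup>* a z" using conn EV1[OF ab] that by blast
    then show ?thesis
    proof (induction rule: rtranclp_induct)
      case base then show ?case by simp
    next
      case (step y z)
      then have "z \<in> nbhd E y" using Es by (simp add: nbhd_def)
      then show ?case using step na nb by auto
    qed
  qed
  then have "V \<subseteq> {a, b}" by blast
  then have "card V \<le> card {a, b}" by (intro card_mono) auto
  also have "\<dots> \<le> 2" by (simp add: card_insert_if)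
  finally show False using big by simp
qed

lemma F_iff: "f \<in> F \<longleftrightarrow> f \<in> V \<and> hT f = 1 \<and> \<chi> f = c"
  by (auto simp: F_def Vk_def)

lemma I_iff: "x \<in> I \<longleftrightarrow> x \<in> V \<and> x \<notin> F \<and> (\<forall>f\<in>F. \<not> E x f)"
  by (auto simp: I_def interior_set_def closed_nbhd_set_def nbhd_set_def nbhd_def F_def)

lemma I_V: "x \<in> I \<Longrightarrow> x \<in> V" using I_iff by blast

lemma F_leaf: assumes "f \<in> F" shows "\<exists>l\<in>V. E f l \<and> nbhd E l = {f} \<and> \<chi> l \<noteq> c"
proof -
  obtain l where l: "E f l" "leaf V E l" using hT1_leafnb assms F_iff by blast
  then have "nbhd E l = {f}" using nb_single by (simp add: leaf_def)
  then show ?thesis using l assms F_iff colc by (auto simp: leaf_def)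
qed

lemma F_forced: assumes "f \<in> F" shows "forced V E \<chi> c X f"
proof -
  obtain l where l: "l \<in> V" "E f l" "nbhd E l = {f}" "\<chi> l \<noteq> c" using F_leaf assms by blast
  have "\<forall>x\<in>X. E x l \<longrightarrow> x = f" using l(3) by (auto simp: nbhd_def)
  then show ?thesis using l unfolding forced_def by blast
qed

lemma red_I_nb: assumes r: "r \<in> I" "\<chi> r \<noteq> c" and e: "E r y" shows "y \<in> I"
proof (rule ccontr)
  assume y: "y \<notin> I"
  have yc: "\<chi> y = c" using colc' e r(2) by blast
  have "y \<in> V" using EV2 e by blast
  then have "y \<in> F \<or> (\<exists>f\<in>F. E y f)" using y I_iff by blast
  then show False
  proof
    assume "y \<in> F" then show False using r(1) e I_iff by blast
  next
    assume "\<exists>f\<in>F. E y f"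
    then obtain f where "f \<in> F" "E y f" by blast
    then show False using prp yc F_iff by metis
  qed
qed

lemma red_I_two: assumes r: "r \<in> I" "\<chi> r \<noteq> c" shows "\<exists>y1 y2. E r y1 \<and> E r y2 \<and> y1 \<noteq> y2"
proof (rule ccontr)
  assume no: "\<not> (\<exists>y1 y2. E r y1 \<and> E r y2 \<and> y1 \<noteq> y2)"
  have rV: "r \<in> V" using r I_V by blast
  obtain y where y: "E r y" using nbr_ex rV by blast
  have "nbhd E r = {y}" using no y Es by (auto simp: nbhd_def)
  then have lr: "leaf V E r" using rV by (simp add: leaf_def)
  have "\<not> leaf V E y"
  proof
    assume "leaf V E y"
    then show False using two_leaves[OF y] lr by (simp add: leaf_def)
  qed
  then have "hT y = 1" using hT1_intro[OF EV2[OF y] Es[OF y] lr] by blast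
  moreover have "\<chi> y = c" using colc' y r(2) by blast
  ultimately have "y \<in> F" using F_iff EV2[OF y] by blast
  then show False using r(1) y I_iff by blast
qed

lemma blue_notI: assumes "x \<in> V" "\<chi> x = c" "x \<notin> I" shows "x \<in> F"
proof (rule ccontr)
  assume "x \<notin> F"
  then obtain f where "f \<in> F" "E x f" using assms I_iff by blast
  then show False using prp assms(2) F_iff by metis
qed

lemma red_notI: assumes "r \<in> V" "\<chi> r \<noteq> c" "r \<notin> I" shows "\<exists>f\<in>F. E f r"
proof -
  have "r \<notin> F" using assms(2) F_iff by blast
  then obtain f where "f \<in> F" "E r f" using assms I_iff by blast
  then show ?thesis using Es by blast
qed

lemma F_not_I: "f \<in> F \<Longrightarrow> f \<notin> I" using I_iff by blast

lemma F_adj_notI: "f \<in> F \<Longrightarrow> E f x \<Longrightarrow> x \<notin> I" using I_iff Es by blast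

end

context tc begin

lemma GW:
  assumes b: "b \<in> I" "\<chi> b = c"
    and q1: "q1 \<in> I" "E b q1"
    and y: "E y q1" "y \<noteq> b"
    and r: "r \<in> I" "E y r" "r \<noteq> q1"
    and e: "e \<in> I" "\<chi> e = c" "E e r" "\<forall>z\<in>I. E e z \<longrightarrow> z = r"
    and Q: "\<forall>q. q \<in> I \<longrightarrow> E b q \<longrightarrow> q \<noteq> q1 \<longrightarrow> (\<exists>\<beta> \<pi>. E \<beta> q \<and> \<beta> \<noteq> b \<and> \<pi> \<in> I \<and> E \<pi> \<beta> \<and> \<pi> \<noteq> q)"
  shows "\<not> unmix V E \<chi> c"
proof -
  define Q' where "Q' = {q. q \<in> I \<and> E b q \<and> q \<noteq> q1}"
  have "\<forall>q\<in>Q'. \<exists>bp. E (fst bp) q \<and> fst bp \<noteq> b \<and> snd bp \<in> I \<and> E (snd bp) (fst bp) \<and> snd bp \<noteq> q"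
  proof
    fix q assume "q \<in> Q'"
    then obtain \<beta> \<pi> where "E \<beta> q \<and> \<beta> \<noteq> b \<and> \<pi> \<in> I \<and> E \<pi> \<beta> \<and> \<pi> \<noteq> q"
      using Q unfolding Q'_def by blast
    then show "\<exists>bp. E (fst bp) q \<and> fst bp \<noteq> b \<and> snd bp \<in> I \<and> E (snd bp) (fst bp) \<and> snd bp \<noteq> q"
      by (intro exI[of _ "(\<beta>, \<pi>)"]) simp
  qed
  from bchoice[OF this] obtain f where f: "\<forall>q\<in>Q'. E (fst (f q)) q \<and> fst (f q) \<noteq> b \<and> snd (f q) \<in> I
      \<and> E (snd (f q)) (fst (f q)) \<and> snd (f q) \<noteq> q" by blast
  define B where "B = (\<lambda>q. fst (f q))"
  define P where "P = (\<lambda>q. snd (f q))"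
  have BP: "\<And>q. q \<in> Q' \<Longrightarrow> E (B q) q \<and> B q \<noteq> b \<and> P q \<in> I \<and> E (P q) (B q) \<and> P q \<noteq> q"
    using f unfolding B_def P_def by blast
  have Q'I: "q \<in> Q' \<Longrightarrow> q \<in> I" "q \<in> Q' \<Longrightarrow> E b q" "q \<in> Q' \<Longrightarrow> q \<noteq> q1" for q
    by (auto simp: Q'_def)
  have cq1: "\<chi> q1 \<noteq> c" using colc q1(2) b(2) by blast
  have cy: "\<chi> y = c" using colc' y(1) cq1 prp Es by metis
  have cr: "\<chi> r \<noteq> c" using colc r(2) cy by blast
  have cq: "q \<in> Q' \<Longrightarrow> \<chi> q \<noteq> c" for q using colc Q'I b(2) by blast
  have cB: "q \<in> Q' \<Longrightarrow> \<chi> (B q) = c" for q using colc' BP cq Es by metis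
  have cP: "q \<in> Q' \<Longrightarrow> \<chi> (P q) \<noteq> c" for q using colc BP cB by metis
  have bq1: "b \<noteq> q1" using Ei q1(2) by blast
  have br: "b \<noteq> r" using b(2) cr by blast
  have bq: "q \<in> Q' \<Longrightarrow> b \<noteq> q" for q using Ei Q'I by blast
  have bP: "q \<in> Q' \<Longrightarrow> b \<noteq> P q" for q using b(2) cP by metis
  have yq1: "y \<noteq> q1" using Ei y(1) by blast
  have K1a: "\<not> E b r"
  proof
    assume "E b r"
    then show False using TLw[OF T, of "[q1, y, r]" b] y r bq1 br q1 Es by auto
  qed
  have K1b: "\<not> E b (P q)" if "q \<in> Q'" for q
  proof
    assume "E b (P q)"
    then show False using TLw[OF T, of "[q, B q, P q]" b] BP[OF that] Q'I[OF that] bq[OF that]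
        bP[OF that] Es by auto
  qed
  have K2c: "P q \<noteq> r" if "q \<in> Q'" for q
  proof
    assume Pr: "P q = r"
    have "wk E [q, B q, r, y, q1]" using BP[OF that] Pr Es y r by auto
    moreover have "b \<notin> set [q, B q, r, y, q1]" using BP[OF that] bq[OF that] br y bq1 by auto
    ultimately show False using TLw[OF T, of "[q, B q, r, y, q1]" b] Q'I[OF that] q1 by auto
  qed
  have K3a: "B q = b" if "q \<in> Q'" "E (B q) q1" for q
  proof (rule ccontr)
    assume "B q \<noteq> b"
    then show False using TLw[OF T, of "[q, B q, q1]" b] BP[OF that(1)] Q'I[OF that(1)] bq[OF that(1)]
        bq1 that(2) q1 Es by auto
  qed
  have K3b: "\<not> E (B q) r" if "q \<in> Q'" for q
  proof
    assume Br: "E (B q) r"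
    have "wk E [q, B q, r, y, q1]" using BP[OF that] Br Es y r by auto
    moreover have "b \<notin> set [q, B q, r, y, q1]" using BP[OF that] bq[OF that] br y bq1 by auto
    ultimately show False using TLw[OF T, of "[q, B q, r, y, q1]" b] Q'I[OF that] q1 by auto
  qed
  have K3c: "B q = B q'" if "q \<in> Q'" "q' \<in> Q'" "q \<noteq> q'" "E (B q) (P q')" for q q'
  proof (rule ccontr)
    assume ne: "B q \<noteq> B q'"
    have "wk E [q, B q, P q', B q', q']" using BP[OF that(1)] BP[OF that(2)] that(4) Es by auto
    moreover have "b \<notin> set [q, B q, P q', B q', q']"
      using BP[OF that(1)] BP[OF that(2)] bq that bP by auto
    ultimately show False using TLw[OF T, of "[q, B q, P q', B q', q']" b] Q'I that(1,2,3) by auto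
  qed
  have K2a: "\<not> E e q1" using e(4) q1(1) r(3) by blast
  have K2c': "\<not> E e (P q)" if "q \<in> Q'" for q using e(4) BP[OF that] K2c[OF that] by blast
  have be: "b \<noteq> e" using K2a q1(2) by blast
  have Be: "B q \<noteq> e" if "q \<in> Q'" for q using K3b[OF that] e(3) by blast
  define Exc where "Exc = (nbhd E q1 - {b}) \<union> (nbhd E r - {e}) \<union> (\<Union>q\<in>Q'. nbhd E (P q) - {B q})"
  define X where "X = {x\<in>V. \<chi> x = c} - Exc"
  have bX: "b \<in> X" unfolding X_def Exc_def using b I_V K1a K1b by (auto simp: nbhd_def)
  have eX: "e \<in> X" unfolding X_def Exc_def using e I_V K2a K2c' by (auto simp: nbhd_def)
  have BX: "B q \<in> X" if "q \<in> Q'" for q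
  proof -
    have "B q \<in> V" using EV1 BP[OF that] by blast
    moreover have "B q \<notin> nbhd E q1 - {b}" using K3a[OF that] by (auto simp: nbhd_def)
    moreover have "B q \<notin> nbhd E r - {e}" using K3b[OF that] by (auto simp: nbhd_def)
    moreover have "B q \<notin> nbhd E (P q') - {B q'}" if "q' \<in> Q'" for q'
      using K3c[OF \<open>q \<in> Q'\<close> that] by (cases "q = q'") (auto simp: nbhd_def)
    ultimately show ?thesis unfolding X_def Exc_def using cB[OF that] by auto
  qed
  have FX: "f \<in> X" if "f \<in> F" for f
  proof -
    have "f \<in> V" "\<chi> f = c" using that F_iff by auto
    moreover have "\<not> E f q1" "\<not> E f r" using F_adj_notI that q1(1) r(1) by blast+
    moreover have "\<not> E f (P q)" if "q \<in> Q'" for q using F_adj_notI \<open>f \<in> F\<close> BP[OF that] by blast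
    ultimately show ?thesis unfolding X_def Exc_def by (auto simp: nbhd_def)
  qed
  define S where "S = {b} \<union> nbhd E b \<union> nbhd E q1 \<union> {r} \<union> nbhd E r \<union> (\<Union>q\<in>Q'. {B q, P q} \<union> nbhd E (P q))"
  have ExcS: "Exc \<subseteq> S" unfolding Exc_def S_def by blast
  have ind: "E u v \<Longrightarrow> u \<in> S \<Longrightarrow> v \<in> S \<Longrightarrow> induced E S u v" for u v by (simp add: induced_def)
  have stp: "(induced E S)\<^sup>*\<^sup>* b u \<Longrightarrow> E u v \<Longrightarrow> u \<in> S \<Longrightarrow> v \<in> S \<Longrightarrow> (induced E S)\<^sup>*\<^sup>* b v" for u v
    using ind by (meson rtranclp.rtrancl_into_rtrancl)
  have bS: "b \<in> S" unfolding S_def by blast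
  have r0: "(induced E S)\<^sup>*\<^sup>* b b" by simp
  have rNb: "(induced E S)\<^sup>*\<^sup>* b a" if "a \<in> nbhd E b" for a
    using stp[OF r0, of a] that bS Es unfolding S_def by (auto simp: nbhd_def)
  have q1S: "q1 \<in> S" unfolding S_def using q1 Es by (auto simp: nbhd_def)
  have rq1: "(induced E S)\<^sup>*\<^sup>* b q1" using rNb q1 Es by (auto simp: nbhd_def)
  have rNq1: "(induced E S)\<^sup>*\<^sup>* b a" if "a \<in> nbhd E q1" for a
    using stp[OF rq1, of a] that q1S Es unfolding S_def by (auto simp: nbhd_def)
  have yS: "y \<in> S" unfolding S_def using y by (auto simp: nbhd_def)
  have ry: "(induced E S)\<^sup>*\<^sup>* b y" using rNq1 y by (auto simp: nbhd_def)
  have rS: "r \<in> S" unfolding S_def by blast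
  have rr: "(induced E S)\<^sup>*\<^sup>* b r" using stp[OF ry r(2) yS rS] .
  have rNr: "(induced E S)\<^sup>*\<^sup>* b a" if "a \<in> nbhd E r" for a
    using stp[OF rr, of a] that rS Es unfolding S_def by (auto simp: nbhd_def)
  have rQ: "(induced E S)\<^sup>*\<^sup>* b a" if "q \<in> Q'" "a \<in> {B q, P q} \<union> nbhd E (P q)" for q a
  proof -
    have qS: "q \<in> S" unfolding S_def using Q'I[OF that(1)] Es by (auto simp: nbhd_def)
    have rq: "(induced E S)\<^sup>*\<^sup>* b q" using rNb Q'I[OF that(1)] Es by (auto simp: nbhd_def)
    have BS: "B q \<in> S" "P q \<in> S" unfolding S_def using that(1) by blast+
    have rB: "(induced E S)\<^sup>*\<^sup>* b (B q)" using stp[OF rq _ qS BS(1)] BP[OF that(1)] Es by blast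
    have rP: "(induced E S)\<^sup>*\<^sup>* b (P q)" using stp[OF rB _ BS] BP[OF that(1)] Es by blast
    have "(induced E S)\<^sup>*\<^sup>* b a" if "a \<in> nbhd E (P q)"
    proof -
      have "a \<in> S" unfolding S_def using that \<open>q \<in> Q'\<close> by blast
      then show ?thesis using stp[OF rP _ BS(2)] that Es by (auto simp: nbhd_def)
    qed
    then show ?thesis using that(2) rB rP by blast
  qed
  have connS: "\<forall>a\<in>S. (induced E S)\<^sup>*\<^sup>* b a"
  proof
    fix a assume "a \<in> S"
    then consider "a = b" | "a \<in> nbhd E b" | "a \<in> nbhd E q1" | "a = r" | "a \<in> nbhd E r"
      | "\<exists>q\<in>Q'. a \<in> {B q, P q} \<union> nbhd E (P q)" unfolding S_def by blast
    then show "(induced E S)\<^sup>*\<^sup>* b a"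
      by cases (use rNb rNq1 rr rNr rQ in blast)+
  qed
  have Xcov: "covers V E \<chi> c X"
    unfolding covers_def
  proof (intro conjI ballI impI)
    show "X \<subseteq> V" unfolding X_def by blast
  next
    fix x assume "x \<in> X" then show "\<chi> x = c" unfolding X_def by blast
  next
    fix z assume z: "z \<in> V" "\<chi> z \<noteq> c"
    show "\<exists>d\<in>X. E d z"
    proof (cases "z \<in> I")
      case False
      then obtain f where "f \<in> F" "E f z" using red_notI z by blast
      then show ?thesis using FX by blast
    next
      case zI: True
      show ?thesis
      proof (cases "z = q1 \<or> z = r \<or> z \<in> Q' \<or> (\<exists>q\<in>Q'. z = P q)")
        case True
        then show ?thesis
        proof (elim disjE)
          assume "z = q1" then show ?thesis using bX q1 by blast
        next
          assume "z = r" then show ?thesis using eX e by blast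
        next
          assume "z \<in> Q'" then show ?thesis using BX BP by blast
        next
          assume "\<exists>q\<in>Q'. z = P q"
          then obtain q where "q \<in> Q'" "z = P q" by blast
          then show ?thesis using BX BP Es by blast
        qed
      next
        case False
        have zS: "z \<notin> S"
        proof
          assume "z \<in> S"
          then consider "z = b" | "z \<in> nbhd E b" | "z \<in> nbhd E q1" | "z = r" | "z \<in> nbhd E r"
            | "\<exists>q\<in>Q'. z \<in> {B q, P q} \<union> nbhd E (P q)" unfolding S_def by blast
          then show False
          proof cases
            case 1 then show ?thesis using b z by simp
          next
            case 2 then have "z \<in> Q'" using zI False Es unfolding Q'_def by (auto simp: nbhd_def)
            then show ?thesis using False by blast
          next
            case 3 then show ?thesis using colc' cq1 z(2) by (auto simp: nbhd_def)
          next
            case 4 then show ?thesis using False by blast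
          next
            case 5 then show ?thesis using colc' cr z(2) by (auto simp: nbhd_def)
          next
            case 6
            then obtain q where q: "q \<in> Q'" "z \<in> {B q, P q} \<union> nbhd E (P q)" by blast
            then show ?thesis using False cB[OF q(1)] z(2) colc' cP[OF q(1)] by (auto simp: nbhd_def)
          qed
        qed
        obtain y1 y2 where yy: "E z y1" "E z y2" "y1 \<noteq> y2" using red_I_two zI z(2) by blast
        have "y1 \<notin> S \<or> y2 \<notin> S"
        proof (rule ccontr)
          assume "\<not> (y1 \<notin> S \<or> y2 \<notin> S)"
          then show False using TL[OF T connS _ _ yy(3) zS yy(1,2)] by blast
        qed
        then obtain w where w: "E z w" "w \<notin> S" using yy by blast
        have "w \<in> X" unfolding X_def using w ExcS EV2 colc' z(2) by blast
        then show ?thesis using w Es by blast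
      qed
    qed
  qed
  have fb: "forced V E \<chi> c X b"
    unfolding forced_def using q1 I_V cq1 unfolding X_def Exc_def by (auto simp: nbhd_def)
  have fe: "forced V E \<chi> c X e"
  proof -
    have "\<forall>x\<in>X. E x r \<longrightarrow> x = e" unfolding X_def Exc_def by (auto simp: nbhd_def)
    then show ?thesis unfolding forced_def using r(1) I_V cr e(3) by blast
  qed
  have fB: "forced V E \<chi> c X (B q)" if "q \<in> Q'" for q
  proof -
    have "\<forall>x\<in>X. E x (P q) \<longrightarrow> x = B q" unfolding X_def Exc_def using that by (auto simp: nbhd_def)
    then show ?thesis unfolding forced_def using BP[OF that] I_V cP[OF that] Es by blast
  qed
  show ?thesis
  proof (rule W[OF fV Xcov, of "{b, e}" "{y}"])
    show "{b, e} \<subseteq> X" using bX eX by blast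
    show "\<forall>x\<in>{b, e}. forced V E \<chi> c X x" using fb fe by blast
    show "finite {y}" by simp
    show "{y} \<subseteq> V" using EV1 y by blast
    show "\<forall>a\<in>{y}. \<chi> a = c" using cy by blast
    show "card {y} < card {b, e}" using be by simp
    show "\<forall>z\<in>V. \<chi> z \<noteq> c \<longrightarrow> (\<forall>x\<in>{b, e}. E x z \<longrightarrow>
               (\<exists>a\<in>{y}. E a z) \<or> (\<exists>w\<in>X - {b, e}. forced V E \<chi> c X w \<and> E w z))"
    proof (intro ballI impI)
      fix z x assume z: "z \<in> V" "\<chi> z \<noteq> c" and x: "x \<in> {b, e}" "E x z"
      show "(\<exists>a\<in>{y}. E a z) \<or> (\<exists>w\<in>X - {b, e}. forced V E \<chi> c X w \<and> E w z)"
      proof (cases "z \<in> I")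
        case False
        then obtain f where f: "f \<in> F" "E f z" using red_notI z by blast
        then have "f \<in> X - {b, e}" using FX F_not_I b e by blast
        then show ?thesis using f F_forced by blast
      next
        case zI: True
        show ?thesis
        proof (cases "x = b")
          case True
          show ?thesis
          proof (cases "z = q1")
            case True then show ?thesis using y by blast
          next
            case False
            then have zq: "z \<in> Q'" unfolding Q'_def using zI x \<open>x = b\<close> by blast
            then have "B z \<in> X - {b, e}" using BX BP Be by blast
            then show ?thesis using fB[OF zq] BP[OF zq] by blast
          qed
        next
          case False
          then have "x = e" using x by blast
          then have "z = r" using e(4) zI x by blast
          then show ?thesis using r by blast
        qed
      qed
    qed
  qed
qed

end

context tc begin

definition comp where "comp x = {u \<in> I. (induced E I)\<^sup>*\<^sup>* x u}"

lemma comps_eq: "components I (induced E I) = {comp x | x. x \<in> I}"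
proof -
  have "induced (induced E I) I = induced E I" by (auto simp: induced_def fun_eq_iff)
  then show ?thesis by (simp add: components_def comp_def)
qed

lemma comp_in: "x \<in> I \<Longrightarrow> comp x \<in> components I (induced E I)"
  using comps_eq by blast

lemma comp_self: "x \<in> I \<Longrightarrow> x \<in> comp x" by (simp add: comp_def)
lemma comp_sub: "comp x \<subseteq> I" by (auto simp: comp_def)

lemma indI_sym: "(induced E I)\<^sup>*\<^sup>* a b \<Longrightarrow> (induced E I)\<^sup>*\<^sup>* b a"
proof (induction rule: rtranclp_induct)
  case base then show ?case by simp
next
  case (step y z)
  then have "induced E I z y" using Es by (auto simp: induced_def)
  then show ?case using step(3) by (rule converse_rtranclp_into_rtranclp)
qed

lemma comp_eq: assumes "u \<in> comp x" shows "comp u = comp x"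
proof -
  have ux: "(induced E I)\<^sup>*\<^sup>* x u" using assms by (simp add: comp_def)
  then have xu: "(induced E I)\<^sup>*\<^sup>* u x" by (rule indI_sym)
  show ?thesis unfolding comp_def using ux xu by (meson rtranclp_trans)
qed

lemma comp_closed: assumes "y \<in> comp x" "z \<in> I" "E y z" shows "z \<in> comp x"
proof -
  have "(induced E I)\<^sup>*\<^sup>* x y" "y \<in> I" using assms(1) by (auto simp: comp_def)
  moreover have "induced E I y z" using assms by (simp add: induced_def \<open>y \<in> I\<close>)
  ultimately show ?thesis using assms(2) by (auto simp: comp_def)
qed

definition cond where
  "cond C \<longleftrightarrow> gheight C (induced E C) \<le> 3
      \<and> (\<forall>v \<in> Vk C (induced E C) 2. card (nbhd (induced E C) v \<inter> Vk C (induced E C) 1) = 1)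
      \<and> (\<forall>v \<in> Vk C (induced E C) 1. card (nbhd (induced E C) v \<inter> Vk C (induced E C) 2) \<le> 1)"

end

locale cc = tc +
  fixes C
  assumes Cin: "C \<in> components I (induced E I)"
begin

lemma C_ex: "\<exists>x0\<in>I. C = comp x0" using Cin comps_eq by blast
lemma C_I: "C \<subseteq> I" using C_ex comp_sub by blast
lemma C_V: "C \<subseteq> V" using C_I I_V by blast
lemma C_ne: "C \<noteq> {}" using C_ex comp_self by blast
lemma C_closed: "y \<in> C \<Longrightarrow> z \<in> I \<Longrightarrow> E y z \<Longrightarrow> z \<in> C" using C_ex comp_closed by blast
lemma C_comp: "x \<in> C \<Longrightarrow> comp x = C" using C_ex comp_eq by blast

sublocale hg V E C using T C_V by unfold_locales

lemma G_iff: "G a b \<longleftrightarrow> E a b \<and> a \<in> C \<and> b \<in> C" by (simp add: induced_def)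

lemma red_C_nb: "r \<in> C \<Longrightarrow> \<chi> r \<noteq> c \<Longrightarrow> E r y \<Longrightarrow> G r y"
  using red_I_nb C_I C_closed G_iff by blast

lemma red_C: assumes "r \<in> C" "\<chi> r \<noteq> c" shows "\<not> leaf C G r" "nbhd G r \<noteq> {}"
proof -
  obtain y1 y2 where y: "E r y1" "E r y2" "y1 \<noteq> y2" using red_I_two assms C_I by blast
  then have "G y1 r" "G y2 r" using red_C_nb assms Gs by blast+
  then have "{y1, y2} \<subseteq> nbhd G r" by (auto simp: nbhd_def)
  then have "card {y1, y2} \<le> card (nbhd G r)" using fin_nb by (rule card_mono[rotated])
  then show "\<not> leaf C G r" using y(3) by (auto simp: leaf_def)
  show "nbhd G r \<noteq> {}" using \<open>G y1 r\<close> by (auto simp: nbhd_def)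
qed

lemma leaf_c: "leaf C G u \<Longrightarrow> \<chi> u = c"
  using red_C(1) by (auto simp: leaf_def)

lemma iso_c: "x \<in> C \<Longrightarrow> nbhd G x = {} \<Longrightarrow> \<chi> x = c"
  using red_C(2) by blast

lemma Galt: "G a b \<Longrightarrow> \<chi> a \<noteq> \<chi> b" using prp GE by blast

lemma parity: assumes "x \<in> C" shows "\<chi> x = c \<longleftrightarrow> even (h x)"
proof (cases "nbhd G x = {}")
  case True then show ?thesis using iso_c assms h_iso by simp
next
  case False
  obtain u where u: "leaf C G u" "(G ^^ h x) x u" using hI[OF assms False] by blast
  have "\<chi> u = \<chi> x \<longleftrightarrow> even (h x)" using relpow_parity[of G \<chi>, OF Galt u(2)] by blast
  then show ?thesis using leaf_c[OF u(1)] by metis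
qed

lemma leaf_nb: "leaf C G l \<Longrightarrow> G x l \<Longrightarrow> nbhd G l = {x}"
proof -
  assume "leaf C G l" "G x l"
  then obtain z where z: "nbhd G l = {z}" by (meson card_1_singletonE leaf_def)
  moreover have "x \<in> nbhd G l" using \<open>G x l\<close> by (simp add: nbhd_def)
  ultimately show ?thesis by simp
qed

lemma leaf_only: "leaf C G l \<Longrightarrow> G x l \<Longrightarrow> z \<in> I \<Longrightarrow> E l z \<Longrightarrow> z = x"
proof -
  assume a: "leaf C G l" "G x l" "z \<in> I" "E l z"
  have "l \<in> C" using a(1) by (simp add: leaf_def)
  then have "G z l" using a C_closed G_iff Es by blast
  then show "z = x" using leaf_nb[OF a(1,2)] by (auto simp: nbhd_def)
qed

lemma card1_eq: "card A = 1 \<Longrightarrow> a \<in> A \<Longrightarrow> b \<in> A \<Longrightarrow> a = b"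
  by (metis card_1_singletonE singletonD)

lemma P2: assumes um: "unmix V E \<chi> c" and v: "v \<in> C" "h v = 2"
  shows "card (nbhd G v \<inter> Vk C G 1) = 1"
proof (rule ccontr)
  assume ne1: "card (nbhd G v \<inter> Vk C G 1) \<noteq> 1"
  let ?N = "nbhd G v \<inter> Vk C G 1"
  have fN: "finite ?N" using fin_nb by blast
  have "h v = Suc 1" using v by simp
  then obtain y where y: "G v y" "h y = 1" using h_step[OF v(1)] by blast
  have "y \<in> ?N" using y Gs GC by (auto simp: nbhd_def Vk_def)
  then have "card ?N \<noteq> 0" using fN by auto
  then have "\<not> card ?N \<le> Suc 0" using ne1 by simp
  then obtain w1 w2 where w: "w1 \<in> ?N" "w2 \<in> ?N" "w1 \<noteq> w2" using card_le_Suc0_iff_eq[OF fN] by blast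
  have w1: "G w1 v" "w1 \<in> C" "h w1 = 1" using w(1) GC by (auto simp: nbhd_def Vk_def)
  have w2: "G w2 v" "w2 \<in> C" "h w2 = 1" using w(2) GC by (auto simp: nbhd_def Vk_def)
  obtain l1 where l1: "G w1 l1" "leaf C G l1" using h1_leafnb w1 by blast
  obtain l2 where l2: "G w2 l2" "leaf C G l2" using h1_leafnb w2 by blast
  have l1C: "l1 \<in> C" "l2 \<in> C" using l1 l2 by (auto simp: leaf_def)
  have "h l1 = 0" using h_leaf l1 by blast
  then have vl1: "v \<noteq> l1" using v by auto
  have "\<not> unmix V E \<chi> c"
  proof (rule GW[of l1 w1 v w2 l2])
    show "l1 \<in> I" "\<chi> l1 = c" using l1C C_I leaf_c l1 by auto
    show "w1 \<in> I" "E l1 w1" using w1 C_I l1 Gs GE by auto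
    show "E v w1" "v \<noteq> l1" using w1 Gs GE vl1 by auto
    show "w2 \<in> I" "E v w2" "w2 \<noteq> w1" using w2 C_I Gs GE w by auto
    show "l2 \<in> I" "\<chi> l2 = c" "E l2 w2" using l1C C_I leaf_c l2 Gs GE by auto
    show "\<forall>z\<in>I. E l2 z \<longrightarrow> z = w2" using leaf_only[OF l2(2) l2(1)] by blast
    show "\<forall>q. q \<in> I \<longrightarrow> E l1 q \<longrightarrow> q \<noteq> w1 \<longrightarrow> (\<exists>\<beta> \<pi>. E \<beta> q \<and> \<beta> \<noteq> l1 \<and> \<pi> \<in> I \<and> E \<pi> \<beta> \<and> \<pi> \<noteq> q)"
      using leaf_only[OF l1(2) l1(1)] by blast
  qed
  then show False using um by blast
qed

lemma P1: assumes um: "unmix V E \<chi> c" and x: "x \<in> C" shows "h x \<le> 3"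
proof (rule ccontr)
  assume "\<not> h x \<le> 3"
  then obtain b where b: "b \<in> C" "h b = 4" using h_down[OF x, of 4] by auto
  have cb: "\<chi> b = c" using parity b by simp
  have "h b = Suc 3" using b by simp
  then obtain q1 where q1: "G b q1" "h q1 = 3" using h_step[OF b(1)] by blast
  have "h q1 = Suc 2" "q1 \<in> C" using q1 GC by auto
  then obtain y where y: "G q1 y" "h y = 2" using h_step by blast
  have "h y = Suc 1" "y \<in> C" using y GC by auto
  then obtain r where r: "G y r" "h r = 1" using h_step by blast
  obtain e where e: "G r e" "leaf C G e" using h1_leafnb[of r] r GC by blast
  have "\<not> unmix V E \<chi> c"
  proof (rule GW[of b q1 y r e])
    show "b \<in> I" "\<chi> b = c" using b C_I cb by auto
    show "q1 \<in> I" "E b q1" using q1 GC C_I GE by auto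
    show "E y q1" "y \<noteq> b" using y Gs GE b q1 by auto
    show "r \<in> I" "E y r" "r \<noteq> q1" using r GC C_I GE q1 by auto
    show "e \<in> I" "\<chi> e = c" "E e r" using e GC C_I leaf_c Gs GE by auto
    show "\<forall>z\<in>I. E e z \<longrightarrow> z = r" using leaf_only[OF e(2) e(1)] by blast
    show "\<forall>q. q \<in> I \<longrightarrow> E b q \<longrightarrow> q \<noteq> q1 \<longrightarrow> (\<exists>\<beta> \<pi>. E \<beta> q \<and> \<beta> \<noteq> b \<and> \<pi> \<in> I \<and> E \<pi> \<beta> \<and> \<pi> \<noteq> q)"
    proof (intro allI impI)
      fix q assume q: "q \<in> I" "E b q" "q \<noteq> q1"
      have qC: "q \<in> C" using C_closed b q by blast
      have Gbq: "G b q" using G_iff b qC q by blast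
      have hq: "3 \<le> h q" using h_lip[OF Gbq] b by simp
      have cq: "\<chi> q \<noteq> c" using colc q(2) cb by blast
      obtain y1 y2 where yy: "E q y1" "E q y2" "y1 \<noteq> y2" using red_I_two q(1) cq by blast
      obtain \<beta> where be: "E q \<beta>" "\<beta> \<noteq> b" using yy by blast
      have Gqb: "G q \<beta>" using red_C_nb qC cq be by blast
      have "h q \<le> Suc (h \<beta>)" using h_lip[OF Gqb] .
      then have "h \<beta> \<noteq> 0" using hq by simp
      then obtain u where u: "G \<beta> u" "u \<noteq> q" using h_other[of \<beta> q] Gqb GC Gs by blast
      show "\<exists>\<beta> \<pi>. E \<beta> q \<and> \<beta> \<noteq> b \<and> \<pi> \<in> I \<and> E \<pi> \<beta> \<and> \<pi> \<noteq> q"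
        using be u Es GE GC C_I by blast
    qed
  qed
  then show False using um by blast
qed

end

lemma odd3: "odd (n::nat) \<Longrightarrow> n \<noteq> 1 \<Longrightarrow> n \<le> 3 \<Longrightarrow> n = 3"
proof -
  assume a: "odd n" "n \<noteq> 1" "n \<le> 3"
  then have "n = 0 \<or> n = 1 \<or> n = 2 \<or> n = 3" by arith
  then show ?thesis using a by auto
qed

lemma even2: "even (n::nat) \<Longrightarrow> 2 \<le> n \<Longrightarrow> n \<le> 3 \<Longrightarrow> n = 2"
proof -
  assume a: "even n" "2 \<le> n" "n \<le> 3"
  then have "n = 2 \<or> n = 3" by arith
  then show ?thesis using a by auto
qed

context cc begin

lemma P3: assumes um: "unmix V E \<chi> c" and w: "w \<in> C" "h w = 1"
  shows "card (nbhd G w \<inter> Vk C G 2) \<le> 1"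
proof (rule ccontr)
  assume "\<not> card (nbhd G w \<inter> Vk C G 2) \<le> 1"
  then obtain v1 v2 where vv: "v1 \<in> nbhd G w \<inter> Vk C G 2" "v2 \<in> nbhd G w \<inter> Vk C G 2" "v1 \<noteq> v2"
    using card_le_Suc0_iff_eq[of "nbhd G w \<inter> Vk C G 2"] fin_nb by auto
  have v1: "G v1 w" "v1 \<in> C" "h v1 = 2" using vv(1) GC by (auto simp: nbhd_def Vk_def)
  have v2: "G v2 w" "v2 \<in> C" "h v2 = 2" using vv(2) GC by (auto simp: nbhd_def Vk_def)
  have cw: "\<chi> w \<noteq> c" using parity w by simp
  have cv1: "\<chi> v1 = c" using parity v1 by simp
  have uniq: "u = w" if "v \<in> C" "h v = 2" "G v w" "G u v" "h u = 1" for v u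
  proof -
    have A: "card (nbhd G v \<inter> Vk C G 1) = 1" using P2[OF um that(1,2)] .
    have wi: "w \<in> nbhd G v \<inter> Vk C G 1" using that w Gs by (auto simp: nbhd_def Vk_def)
    have ui: "u \<in> nbhd G v \<inter> Vk C G 1" using that GC by (auto simp: nbhd_def Vk_def)
    show ?thesis using card1_eq[OF A ui wi] .
  qed
  have hle: "\<And>x. x \<in> C \<Longrightarrow> h x \<le> 3" using P1[OF um] by blast
  have h3: "h q = 3" if "v \<in> C" "h v = 2" "G v w" "G v q" "q \<noteq> w" for v q
  proof -
    have qC: "q \<in> C" using that GC by blast
    have "\<chi> v = c" using parity that by simp
    then have "\<chi> q \<noteq> c" using colc GE that by blast
    then have "odd (h q)" using parity qC by simp
    moreover have "h q \<noteq> 1" using uniq[OF that(1,2,3), of q] that Gs by blast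
    moreover have "h q \<le> 3" using hle qC by blast
    ultimately show ?thesis by (rule odd3)
  qed
  obtain s1 where s1: "G v1 s1" "s1 \<noteq> w" using h_other[of v1 w] v1 Gs by auto
  obtain s2 where s2: "G v2 s2" "s2 \<noteq> w" using h_other[of v2 w] v2 Gs by auto
  have hs1: "h s1 = 3" using h3[OF v1(2,3) v1(1) s1] .
  have s1C: "s1 \<in> C" using s1 GC by blast
  obtain y where y: "G s1 y" "y \<noteq> v1" using h_other[of s1 v1] s1C hs1 s1 Gs by auto
  have yC: "y \<in> C" using y GC by blast
  have cs1: "\<chi> s1 \<noteq> c" using parity s1C hs1 by simp
  have cy: "\<chi> y = c" using colc' GE y cs1 by blast
  have hy: "h y = 2"
  proof -
    have "even (h y)" using parity yC cy by simp
    moreover have "h s1 \<le> Suc (h y)" using h_lip[OF y(1)] .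
    moreover have "h y \<le> 3" using hle yC by blast
    ultimately show ?thesis using hs1 even2 by simp
  qed
  have "h y = Suc 1" using hy by simp
  then obtain r where r: "G y r" "h r = 1" using h_step[OF yC] by blast
  have rC: "r \<in> C" using r GC by blast
  obtain e where e: "G r e" "leaf C G e" using h1_leafnb[OF rC r(2)] by blast
  have "\<not> unmix V E \<chi> c"
  proof (rule GW[of v1 s1 y r e])
    show "v1 \<in> I" "\<chi> v1 = c" using v1 C_I cv1 by auto
    show "s1 \<in> I" "E v1 s1" using s1C C_I s1 GE by auto
    show "E y s1" "y \<noteq> v1" using y Gs GE by auto
    show "r \<in> I" "E y r" "r \<noteq> s1" using rC C_I r GE hs1 by auto
    show "e \<in> I" "\<chi> e = c" "E e r" using e GC C_I leaf_c Gs GE by auto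
    show "\<forall>z\<in>I. E e z \<longrightarrow> z = r" using leaf_only[OF e(2) e(1)] by blast
    show "\<forall>q. q \<in> I \<longrightarrow> E v1 q \<longrightarrow> q \<noteq> s1 \<longrightarrow> (\<exists>\<beta> \<pi>. E \<beta> q \<and> \<beta> \<noteq> v1 \<and> \<pi> \<in> I \<and> E \<pi> \<beta> \<and> \<pi> \<noteq> q)"
    proof (intro allI impI)
      fix q assume q: "q \<in> I" "E v1 q" "q \<noteq> s1"
      show "\<exists>\<beta> \<pi>. E \<beta> q \<and> \<beta> \<noteq> v1 \<and> \<pi> \<in> I \<and> E \<pi> \<beta> \<and> \<pi> \<noteq> q"
      proof (cases "q = w")
        case True
        have "E v2 w" "v2 \<noteq> v1" "s2 \<in> I" "E s2 v2" "s2 \<noteq> w"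
          using v2 vv(3) s2 GE GC C_I Gs by auto
        then show ?thesis using True by blast
      next
        case False
        have qC: "q \<in> C" using C_closed v1 q by blast
        have Gvq: "G v1 q" using G_iff v1 qC q by blast
        have hq: "h q = 3" using h3[OF v1(2,3) v1(1) Gvq False] .
        have cq: "\<chi> q \<noteq> c" using colc q(2) cv1 by blast
        obtain y1 y2 where yy: "E q y1" "E q y2" "y1 \<noteq> y2" using red_I_two q(1) cq by blast
        obtain \<beta> where be: "E q \<beta>" "\<beta> \<noteq> v1" using yy by blast
        have Gqb: "G q \<beta>" using red_C_nb qC cq be by blast
        have "h q \<le> Suc (h \<beta>)" using h_lip[OF Gqb] .
        then have "h \<beta> \<noteq> 0" using hq by simp
        then obtain u where u: "G \<beta> u" "u \<noteq> q" using h_other[of \<beta> q] Gqb GC Gs by blast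
        show ?thesis using be u Es GE GC C_I by blast
      qed
    qed
  qed
  then show False using um by blast
qed

lemma unmix_cond: "unmix V E \<chi> c \<Longrightarrow> cond C"
  unfolding cond_def using P1 P2 P3 gheight_le[OF C_ne] by (auto simp: Vk_def)

end

lemma even02: "n \<le> 3 \<Longrightarrow> even (n::nat) \<Longrightarrow> n = 0 \<or> n = 2"
proof -
  assume a: "n \<le> 3" "even n"
  then have "n = 0 \<or> n = 1 \<or> n = 2 \<or> n = 3" by arith
  then show ?thesis using a by auto
qed

context tc begin

lemma FD: assumes m: "mincov V E \<chi> c D" shows "F \<subseteq> D"
proof
  fix f assume f: "f \<in> F"
  obtain l where l: "l \<in> V" "E f l" "nbhd E l = {f}" "\<chi> l \<noteq> c" using F_leaf f by blast
  obtain d where "d \<in> D" "E d l" using m l by (auto simp: mincov_def covers_def)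
  then show "f \<in> D" using l(3) by (auto simp: nbhd_def)
qed

lemma DF_I: assumes m: "mincov V E \<chi> c D" and d: "d \<in> D" "d \<notin> F" shows "d \<in> I"
proof -
  have "d \<in> V" "\<chi> d = c" using m d by (auto simp: mincov_def covers_def)
  then show ?thesis using blue_notI d by blast
qed

lemma DF_priv: assumes m: "mincov V E \<chi> c D" and d: "d \<in> D" "d \<notin> F"
  shows "\<exists>p\<in>I. E d p \<and> (\<forall>d'\<in>D. E d' p \<longrightarrow> d' = d)"
proof -
  obtain p where p: "p \<in> V" "\<chi> p \<noteq> c" "E d p" "\<forall>d'\<in>D. E d' p \<longrightarrow> d' = d"
    using mincov_private[OF m d(1)] by blast
  have "p \<in> I"
  proof (rule ccontr)
    assume "p \<notin> I"
    then obtain f where "f \<in> F" "E f p" using red_notI p by blast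
    then show False using p(4) FD[OF m] d by blast
  qed
  then show ?thesis using p by blast
qed

end

context cc begin

lemma cc_d: assumes cd: "cond C" and m: "mincov V E \<chi> c D" and d: "d \<in> D" "d \<in> C"
  shows "\<exists>p. G d p \<and> (\<forall>d'\<in>D. E d' p \<longrightarrow> d' = d) \<and> ((h d = 0 \<and> leaf C G d) \<or> h d = 2)"
proof -
  have dF: "d \<notin> F" using d C_I F_not_I by blast
  obtain p where p: "p \<in> I" "E d p" "\<forall>d'\<in>D. E d' p \<longrightarrow> d' = d" using DF_priv[OF m d(1) dF] by blast
  have Gdp: "G d p" using p d C_closed G_iff by blast
  have cd': "\<chi> d = c" using m d by (auto simp: mincov_def covers_def)
  have ev: "even (h d)" using parity d(2) cd' by simp
  have "h d \<le> 3" using cd gheight_le[OF C_ne] d(2) unfolding cond_def by blast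
  then have "h d = 0 \<or> h d = 2" using ev even02 by blast
  moreover have "h d = 0 \<Longrightarrow> leaf C G d" using h0_leaf[OF d(2) nb_ne[OF Gdp]] by blast
  ultimately show ?thesis using Gdp p by blast
qed

lemma cc_exist: assumes cd: "cond C" and m: "mincov V E \<chi> c D" and d: "d \<in> D" "d \<in> C"
  shows "\<exists>z. z \<in> C \<and> h z = 1 \<and> E d z"
proof -
  obtain p where p: "G d p" "(h d = 0 \<and> leaf C G d) \<or> h d = 2" using cc_d[OF assms] by blast
  show ?thesis
  proof (cases "h d = 2")
    case True
    then have "card (nbhd G d \<inter> Vk C G 1) = 1" using cd d unfolding cond_def by (auto simp: Vk_def)
    then obtain z where "z \<in> nbhd G d \<inter> Vk C G 1" by (metis card_1_singletonE singletonI)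
    then show ?thesis using GE Gs by (auto simp: nbhd_def Vk_def)
  next
    case False
    then have ld: "leaf C G d" using p by auto
    have pC: "p \<in> C" using p GC by blast
    have "\<chi> d = c" using m d unfolding mincov_def covers_def by blast
    then have cp: "\<chi> p \<noteq> c" using colc[OF GE[OF p(1)]] by blast
    have "h p = 1" using h1_intro[OF pC Gs[OF p(1)] ld red_C(1)[OF pC cp]] .
    then show ?thesis using pC p GE by blast
  qed
qed

lemma cc_uniq: assumes cd: "cond C" and m: "mincov V E \<chi> c D" and d: "d \<in> D" "d \<in> C"
  and z: "z \<in> C" "h z = 1" "E d z" and z': "z' \<in> C" "h z' = 1" "E d z'"
  shows "z = z'"
proof -
  obtain p where p: "G d p" "(h d = 0 \<and> leaf C G d) \<or> h d = 2" using cc_d[OF cd m d] by blast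
  have Gz: "G z d" "G z' d" using z z' d G_iff Es by auto
  show ?thesis
  proof (cases "h d = 2")
    case True
    then have A: "card (nbhd G d \<inter> Vk C G 1) = 1" using cd d unfolding cond_def by (auto simp: Vk_def)
    have "z \<in> nbhd G d \<inter> Vk C G 1" "z' \<in> nbhd G d \<inter> Vk C G 1" using Gz z z' by (auto simp: nbhd_def Vk_def)
    then show ?thesis using card1_eq[OF A] by blast
  next
    case False
    then have ld: "leaf C G d" using p by auto
    have nb: "nbhd G d = {p}" using leaf_nb[OF ld Gs[OF p(1)]] .
    have "z \<in> nbhd G d" "z' \<in> nbhd G d" using Gz by (auto simp: nbhd_def)
    then show ?thesis using nb by simp
  qed
qed

lemma cc_inj: assumes cd: "cond C" and m: "mincov V E \<chi> c D"
  and d1: "d1 \<in> D" "d1 \<in> C" and d2: "d2 \<in> D" "d2 \<in> C"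
  and z: "z \<in> C" "h z = 1" "E d1 z" "E d2 z"
  shows "d1 = d2"
proof (rule ccontr)
  assume ne: "d1 \<noteq> d2"
  have leafcase: False if da: "da \<in> D" "da \<in> C" and db: "db \<in> D" "da \<noteq> db" and ez: "E da z" "E db z"
    and lf: "h da = 0 \<and> leaf C G da" for da db
  proof -
    obtain p where p: "G da p" "\<forall>d'\<in>D. E d' p \<longrightarrow> d' = da" using cc_d[OF cd m da] by blast
    have "nbhd G da = {p}" using leaf_nb[OF conjunct2[OF lf] Gs[OF p(1)]] .
    moreover have "G z da" using z da ez G_iff Es by auto
    ultimately have "z = p" by (auto simp: nbhd_def)
    then show False using p(2) db ez by blast
  qed
  obtain p1 where p1: "(h d1 = 0 \<and> leaf C G d1) \<or> h d1 = 2" using cc_d[OF cd m d1] by blast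
  obtain p2 where p2: "(h d2 = 0 \<and> leaf C G d2) \<or> h d2 = 2" using cc_d[OF cd m d2] by blast
  show False
  proof (cases "h d1 = 2 \<and> h d2 = 2")
    case True
    have "card (nbhd G z \<inter> Vk C G 2) \<le> 1" using cd z unfolding cond_def by (auto simp: Vk_def)
    moreover have "d1 \<in> nbhd G z \<inter> Vk C G 2" "d2 \<in> nbhd G z \<inter> Vk C G 2"
      using True d1 d2 z G_iff by (auto simp: nbhd_def Vk_def)
    moreover have "finite (nbhd G z \<inter> Vk C G 2)" using fin_nb by blast
    ultimately show False using ne card_le_Suc0_iff_eq by (metis One_nat_def)
  next
    case False
    then have "(h d1 = 0 \<and> leaf C G d1) \<or> (h d2 = 0 \<and> leaf C G d2)" using p1 p2 by auto
    then show False
    proof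
      assume "h d1 = 0 \<and> leaf C G d1"
      then show False using leafcase[OF d1 d2(1) ne z(3) z(4)] by blast
    next
      assume "h d2 = 0 \<and> leaf C G d2"
      then show False using leafcase[OF d2 d1(1) ne[symmetric] z(4) z(3)] by blast
    qed
  qed
qed

end

context tc begin

lemma cc_of: "x \<in> I \<Longrightarrow> cc V E \<chi> c (comp x)"
  by (intro cc.intro tc_axioms cc_axioms.intro comp_in)

definition hh where "hh z = vheight (comp z) (induced E (comp z)) z"
definition R1 where "R1 = {z \<in> I. hh z = 1}"

lemma ex1: assumes all: "\<forall>C\<in>components I (induced E I). cond C" and m: "mincov V E \<chi> c D"
  and d: "d \<in> D" "d \<notin> F" shows "\<exists>!z. z \<in> R1 \<and> E d z"
proof -
  have dI: "d \<in> I" using DF_I[OF m d] .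
  interpret X: cc V E \<chi> c "comp d" by (rule cc_of[OF dI])
  have cd: "cond (comp d)" using all comp_in[OF dI] by blast
  obtain z where z: "z \<in> comp d" "X.h z = 1" "E d z" using X.cc_exist[OF cd m d(1) comp_self[OF dI]] by blast
  have "comp z = comp d" using comp_eq z(1) .
  then have zR: "z \<in> R1" using z comp_sub unfolding R1_def hh_def by auto
  show ?thesis
  proof (rule ex1I[of _ z])
    show "z \<in> R1 \<and> E d z" using zR z by blast
  next
    fix z' assume z': "z' \<in> R1 \<and> E d z'"
    then have z'C: "z' \<in> comp d" using comp_closed[OF comp_self[OF dI]] unfolding R1_def by blast
    then have "comp z' = comp d" using comp_eq by blast
    then have "X.h z' = 1" using z' unfolding R1_def hh_def by auto
    then show "z' = z" using X.cc_uniq[OF cd m d(1) comp_self[OF dI] z'C _ _ z(1,2,3)] z' by blast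
  qed
qed

lemma inj1: assumes all: "\<forall>C\<in>components I (induced E I). cond C" and m: "mincov V E \<chi> c D"
  and d1: "d1 \<in> D" "d1 \<notin> F" and d2: "d2 \<in> D" "d2 \<notin> F" and z: "z \<in> R1" "E d1 z" "E d2 z"
  shows "d1 = d2"
proof -
  have zI: "z \<in> I" using z unfolding R1_def by blast
  interpret X: cc V E \<chi> c "comp z" by (rule cc_of[OF zI])
  have cd: "cond (comp z)" using all comp_in[OF zI] by blast
  have d1C: "d1 \<in> comp z" using comp_closed[OF comp_self[OF zI] DF_I[OF m d1]] Es z by blast
  have d2C: "d2 \<in> comp z" using comp_closed[OF comp_self[OF zI] DF_I[OF m d2]] Es z by blast
  have "X.h z = 1" using z unfolding R1_def hh_def by auto
  then show ?thesis using X.cc_inj[OF cd m d1(1) d1C d2(1) d2C comp_self[OF zI]] z by blast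
qed

lemma card_D: assumes all: "\<forall>C\<in>components I (induced E I). cond C" and m: "mincov V E \<chi> c D"
  shows "card D = card F + card R1"
proof -
  define \<phi> where "\<phi> d = (THE z. z \<in> R1 \<and> E d z)" for d
  have ph: "\<phi> d \<in> R1 \<and> E d (\<phi> d)" if "d \<in> D - F" for d
    unfolding \<phi>_def using theI'[OF ex1[OF all m, of d]] that by blast
  have "bij_betw \<phi> (D - F) R1"
    unfolding bij_betw_def
  proof (intro conjI)
    show "inj_on \<phi> (D - F)"
    proof (rule inj_onI)
      fix d1 d2 assume a: "d1 \<in> D - F" "d2 \<in> D - F" "\<phi> d1 = \<phi> d2"
      then show "d1 = d2" using inj1[OF all m, of d1 d2 "\<phi> d1"] ph[OF a(1)] ph[OF a(2)] by auto
    qed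
    show "\<phi> ` (D - F) = R1"
    proof
      show "\<phi> ` (D - F) \<subseteq> R1" using ph by blast
    next
      show "R1 \<subseteq> \<phi> ` (D - F)"
      proof
        fix z assume zR: "z \<in> R1"
        then have zI: "z \<in> I" unfolding R1_def by blast
        interpret X: cc V E \<chi> c "comp z" by (rule cc_of[OF zI])
        have "X.h z = 1" using zR unfolding R1_def hh_def by auto
        then have cz: "\<chi> z \<noteq> c" using X.parity[OF comp_self[OF zI]] by simp
        have "covers V E \<chi> c D" using m unfolding mincov_def by blast
        then have "\<forall>r\<in>V. \<chi> r \<noteq> c \<longrightarrow> (\<exists>d\<in>D. E d r)" unfolding covers_def by blast
        then obtain d where d: "d \<in> D" "E d z" using I_V[OF zI] cz by blast
        have dF: "d \<notin> F" using F_adj_notI zI d(2) by blast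
        have "\<phi> d = z" unfolding \<phi>_def using the1_equality[OF ex1[OF all m d(1) dF]] zR d(2) by blast
        then show "z \<in> \<phi> ` (D - F)" using d dF by blast
      qed
    qed
  qed
  then have "card (D - F) = card R1" by (rule bij_betw_same_card)
  moreover have "finite D" using m fV finite_subset by (auto simp: mincov_def covers_def)
  moreover have "F \<subseteq> D" using FD[OF m] .
  ultimately show ?thesis by (metis card_Diff_subset card_mono finite_subset le_add_diff_inverse)
qed

lemma cond_unmix: "\<forall>C\<in>components I (induced E I). cond C \<Longrightarrow> unmix V E \<chi> c"
  unfolding unmix_def using card_D by metis

lemma unmix_iff: "unmix V E \<chi> c \<longleftrightarrow> (\<forall>C\<in>components I (induced E I). cond C)"
proof
  assume um: "unmix V E \<chi> c"
  show "\<forall>C\<in>components I (induced E I). cond C"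
  proof
    fix C assume C: "C \<in> components I (induced E I)"
    interpret X: cc V E \<chi> c C by (intro cc.intro tc_axioms cc_axioms.intro C)
    show "cond C" using X.unmix_cond[OF um] .
  qed
qed (rule cond_unmix)

lemma unmix_iff': "unmix V E \<chi> c \<longleftrightarrow>
   (\<forall>C \<in> components (interior_set V E \<chi> c) (induced E (interior_set V E \<chi> c)).
        gheight C (induced E C) \<le> 3
      \<and> (\<forall>v \<in> Vk C (induced E C) 2. card (nbhd (induced E C) v \<inter> Vk C (induced E C) 1) = 1)
      \<and> (\<forall>v \<in> Vk C (induced E C) 1. card (nbhd (induced E C) v \<inter> Vk C (induced E C) 2) \<le> 1))"
  using unmix_iff unfolding I_def cond_def .

end

lemma col_cases: "(x::color) = Blue \<or> x = Red" by (cases x) auto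

lemma TD_iff: assumes sg: "simple_graph V E"
  shows "is_TD_set V E D \<longleftrightarrow> D \<subseteq> V \<and> (\<forall>x\<in>V. \<exists>d\<in>D. E x d)"
proof -
  have "nbhd_set E D \<subseteq> V" using sg_V1[OF sg] by (auto simp: nbhd_set_def nbhd_def)
  then show ?thesis unfolding is_TD_set_def by (auto simp: nbhd_set_def nbhd_def)
qed

lemma TD_split:
  assumes sg: "simple_graph V E" and col: "proper_2_coloring V E \<chi>" and DV: "D \<subseteq> V"
  shows "is_TD_set V E D \<longleftrightarrow> covers V E \<chi> Blue (D \<inter> {x. \<chi> x = Blue}) \<and> covers V E \<chi> Red (D \<inter> {x. \<chi> x = Red})"
proof -
  have pr: "E u v \<Longrightarrow> \<chi> u \<noteq> \<chi> v" for u v using col by (simp add: proper_2_coloring_def)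
  have oth: "E u v \<Longrightarrow> \<chi> v \<noteq> k \<Longrightarrow> \<chi> u = k" for u v k using pr color2 by metis
  show ?thesis
  proof
    assume td: "is_TD_set V E D"
    then have cov: "\<forall>x\<in>V. \<exists>d\<in>D. E x d" using TD_iff[OF sg] by blast
    have "covers V E \<chi> k (D \<inter> {x. \<chi> x = k})" for k
      unfolding covers_def
    proof (intro conjI ballI impI)
      show "D \<inter> {x. \<chi> x = k} \<subseteq> V" using DV by blast
      show "\<And>d. d \<in> D \<inter> {x. \<chi> x = k} \<Longrightarrow> \<chi> d = k" by blast
      fix r assume r: "r \<in> V" "\<chi> r \<noteq> k"
      then obtain d where "d \<in> D" "E r d" using cov by blast
      then show "\<exists>d\<in>D \<inter> {x. \<chi> x = k}. E d r" using oth[of d r k] r sg_sym[OF sg] by blast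
    qed
    then show "covers V E \<chi> Blue (D \<inter> {x. \<chi> x = Blue}) \<and> covers V E \<chi> Red (D \<inter> {x. \<chi> x = Red})" by blast
  next
    assume a: "covers V E \<chi> Blue (D \<inter> {x. \<chi> x = Blue}) \<and> covers V E \<chi> Red (D \<inter> {x. \<chi> x = Red})"
    have "\<forall>x\<in>V. \<exists>d\<in>D. E x d"
    proof
      fix x assume x: "x \<in> V"
      show "\<exists>d\<in>D. E x d"
      proof (cases "\<chi> x = Blue")
        case True
        then have "\<chi> x \<noteq> Red" by simp
        then obtain d where "d \<in> D" "E d x" using a x unfolding covers_def by blast
        then show ?thesis using sg_sym[OF sg] by blast
      next
        case False
        then obtain d where "d \<in> D" "E d x" using a x unfolding covers_def by blast
        then show ?thesis using sg_sym[OF sg] by blast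
      qed
    qed
    then show "is_TD_set V E D" using TD_iff[OF sg] DV by blast
  qed
qed

lemma step1:
  assumes sg: "simple_graph V E" and col: "proper_2_coloring V E \<chi>" and fV: "finite V"
    and nb: "\<forall>x\<in>V. \<exists>y. E x y"
  shows "unmixed V E \<longleftrightarrow> unmix V E \<chi> Blue \<and> unmix V E \<chi> Red"
proof -
  define B where "B = {x. \<chi> x = Blue}"
  define R where "R = {x. \<chi> x = Red}"
  have BR: "B \<inter> R = {}" "\<And>x. x \<in> B \<or> x \<in> R" unfolding B_def R_def using col_cases by auto
  have pr: "E u v \<Longrightarrow> \<chi> u \<noteq> \<chi> v" for u v using col by (simp add: proper_2_coloring_def)
  have TDV: "is_TD_set V E D \<Longrightarrow> D \<subseteq> V" for D by (simp add: is_TD_set_def)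
  have covV: "covers V E \<chi> k D \<Longrightarrow> D \<subseteq> V" for k D by (simp add: covers_def)
  have covk: "covers V E \<chi> k D \<Longrightarrow> D \<subseteq> {x. \<chi> x = k}" for k D by (auto simp: covers_def)
  have split: "is_TD_set V E D \<longleftrightarrow> covers V E \<chi> Blue (D \<inter> B) \<and> covers V E \<chi> Red (D \<inter> R)" if "D \<subseteq> V" for D
    using TD_split[OF sg col that] unfolding B_def R_def .
  (* minimal TD sets = unions of minimal covers *)
  have min1: "mincov V E \<chi> Blue (D \<inter> B) \<and> mincov V E \<chi> Red (D \<inter> R)" if m: "minimal_TD_set V E D" for D
  proof -
    have td: "is_TD_set V E D" using m by (simp add: minimal_TD_set_def)
    have DV: "D \<subseteq> V" using TDV td .
    have c: "covers V E \<chi> Blue (D \<inter> B)" "covers V E \<chi> Red (D \<inter> R)" using split[OF DV] td by auto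
    have "\<not> covers V E \<chi> Blue S" if S: "S \<subset> D \<inter> B" for S
    proof
      assume cS: "covers V E \<chi> Blue S"
      have SB: "S \<subseteq> B" using S by blast
      have sub: "S \<union> (D \<inter> R) \<subset> D" using S BR by blast
      have "(S \<union> (D \<inter> R)) \<inter> B = S" "(S \<union> (D \<inter> R)) \<inter> R = D \<inter> R" using SB BR by blast+
      then have "is_TD_set V E (S \<union> (D \<inter> R))" using split[of "S \<union> (D \<inter> R)"] cS c DV sub by auto
      then show False using m sub by (simp add: minimal_TD_set_def)
    qed
    moreover have "\<not> covers V E \<chi> Red S" if S: "S \<subset> D \<inter> R" for S
    proof
      assume cS: "covers V E \<chi> Red S"
      have SR: "S \<subseteq> R" using S by blast
      have sub: "(D \<inter> B) \<union> S \<subset> D" using S BR by blast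
      have "((D \<inter> B) \<union> S) \<inter> B = D \<inter> B" "((D \<inter> B) \<union> S) \<inter> R = S" using SR BR by blast+
      then have "is_TD_set V E ((D \<inter> B) \<union> S)" using split[of "(D \<inter> B) \<union> S"] cS c DV sub by auto
      then show False using m sub by (simp add: minimal_TD_set_def)
    qed
    ultimately show ?thesis using c by (simp add: mincov_def)
  qed
  have min2: "minimal_TD_set V E (S1 \<union> S2)" if m1: "mincov V E \<chi> Blue S1" and m2: "mincov V E \<chi> Red S2" for S1 S2
  proof -
    have c1: "covers V E \<chi> Blue S1" and c2: "covers V E \<chi> Red S2" using m1 m2 by (auto simp: mincov_def)
    have S1B: "S1 \<subseteq> B" using covk[OF c1] unfolding B_def .
    have S2R: "S2 \<subseteq> R" using covk[OF c2] unfolding R_def .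
    have eq: "(S1 \<union> S2) \<inter> B = S1" "(S1 \<union> S2) \<inter> R = S2" using S1B S2R BR by blast+
    have UV: "S1 \<union> S2 \<subseteq> V" using covV c1 c2 by blast
    have td: "is_TD_set V E (S1 \<union> S2)" using split[OF UV] eq c1 c2 by simp
    have "\<not> is_TD_set V E D'" if D': "D' \<subset> S1 \<union> S2" for D'
    proof
      assume tdD: "is_TD_set V E D'"
      have "D' \<subseteq> V" using TDV tdD .
      then have cc: "covers V E \<chi> Blue (D' \<inter> B)" "covers V E \<chi> Red (D' \<inter> R)" using split tdD by blast+
      have "D' \<inter> B \<subseteq> S1" "D' \<inter> R \<subseteq> S2" using D' eq by blast+
      then have "D' \<inter> B = S1" "D' \<inter> R = S2" using cc m1 m2 unfolding mincov_def by blast+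
      then have "S1 \<union> S2 \<subseteq> D'" by blast
      then show False using D' by blast
    qed
    then show ?thesis using td by (simp add: minimal_TD_set_def)
  qed
  have cardU: "card (S1 \<union> S2) = card S1 + card S2" if "S1 \<subseteq> B" "S2 \<subseteq> R" "S1 \<subseteq> V" "S2 \<subseteq> V" for S1 S2
  proof -
    have "finite S1" "finite S2" using that fV finite_subset by blast+
    moreover have "S1 \<inter> S2 = {}" using that BR by blast
    ultimately show ?thesis by (rule card_Un_disjoint)
  qed
  have ex: "\<exists>S. mincov V E \<chi> k S" for k
  proof -
    have "covers V E \<chi> k (V \<inter> {x. \<chi> x = k})"
      unfolding covers_def
    proof (intro conjI ballI impI)
      fix r assume r: "r \<in> V" "\<chi> r \<noteq> k"
      then obtain y where y: "E r y" using nb by blast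
      then have "\<chi> y = k" using pr r(2) color2 by metis
      then show "\<exists>d\<in>V \<inter> {x. \<chi> x = k}. E d r" using y sg_V2[OF sg] sg_sym[OF sg] by blast
    qed auto
    then show ?thesis using mincov_exists[OF fV] by blast
  qed
  have cardD: "card D = card (D \<inter> B) + card (D \<inter> R)" if "D \<subseteq> V" for D
  proof -
    have "D = (D \<inter> B) \<union> (D \<inter> R)" using BR by blast
    then show ?thesis using cardU[of "D \<inter> B" "D \<inter> R"] that by (metis Int_lower2 le_infI1)
  qed
  have mcB: "S \<subseteq> B \<and> S \<subseteq> V" if "mincov V E \<chi> Blue S" for S
  proof -
    have "covers V E \<chi> Blue S" using that by (simp add: mincov_def)
    then show ?thesis using covk[of Blue S] covV[of Blue S] unfolding B_def by blast
  qed
  have mcR: "S \<subseteq> R \<and> S \<subseteq> V" if "mincov V E \<chi> Red S" for S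
  proof -
    have "covers V E \<chi> Red S" using that by (simp add: mincov_def)
    then show ?thesis using covk[of Red S] covV[of Red S] unfolding R_def by blast
  qed
  show ?thesis
  proof
    assume um: "unmixed V E"
    have "unmix V E \<chi> Blue"
      unfolding unmix_def
    proof (intro allI impI)
      fix S1 S1' assume a: "mincov V E \<chi> Blue S1" "mincov V E \<chi> Blue S1'"
      obtain S2 where s2: "mincov V E \<chi> Red S2" using ex by blast
      have "card (S1 \<union> S2) = card (S1' \<union> S2)" using um min2[OF a(1) s2] min2[OF a(2) s2]
        unfolding unmixed_def by blast
      then show "card S1 = card S1'" using cardU mcB[OF a(1)] mcB[OF a(2)] mcR[OF s2] by simp
    qed
    moreover have "unmix V E \<chi> Red"
      unfolding unmix_def
    proof (intro allI impI)
      fix S2 S2' assume a: "mincov V E \<chi> Red S2" "mincov V E \<chi> Red S2'"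
      obtain S1 where s1: "mincov V E \<chi> Blue S1" using ex by blast
      have "card (S1 \<union> S2) = card (S1 \<union> S2')" using um min2[OF s1 a(1)] min2[OF s1 a(2)]
        unfolding unmixed_def by blast
      then show "card S2 = card S2'" using cardU mcR[OF a(1)] mcR[OF a(2)] mcB[OF s1] by simp
    qed
    ultimately show "unmix V E \<chi> Blue \<and> unmix V E \<chi> Red" by blast
  next
    assume um: "unmix V E \<chi> Blue \<and> unmix V E \<chi> Red"
    show "unmixed V E"
      unfolding unmixed_def
    proof (intro allI impI)
      fix D1 D2 assume a: "minimal_TD_set V E D1" "minimal_TD_set V E D2"
      have V1: "D1 \<subseteq> V" "D2 \<subseteq> V" using a TDV by (auto simp: minimal_TD_set_def)
      have "card (D1 \<inter> B) = card (D2 \<inter> B)" "card (D1 \<inter> R) = card (D2 \<inter> R)"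
        using um min1[OF a(1)] min1[OF a(2)] unfolding unmix_def by blast+
      then show "card D1 = card D2" using cardD V1 by simp
    qed
  qed
qed

lemma small_V: assumes "card V \<le> 2" "finite V" "x \<in> V" "y \<in> V" "x \<noteq> y" "z \<in> V" shows "z = x \<or> z = y"
proof (rule ccontr)
  assume "\<not> (z = x \<or> z = y)"
  then have "card {x, y, z} = 3" using assms(5) by (auto simp: card_insert_if)
  moreover have "card {x, y, z} \<le> card V" using assms by (intro card_mono) auto
  ultimately show False using assms(1) by simp
qed

lemma small_h0: assumes T: "tree V E" and sm: "card V \<le> 2" and CV: "C \<subseteq> V" and x: "x \<in> C"
  shows "vheight C (induced E C) x = 0"
proof -
  interpret hg V E C using T CV by unfold_locales
  show ?thesis
  proof (cases "nbhd G x = {}")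
    case True then show ?thesis by (rule h_iso)
  next
    case False
    then obtain y where y: "G y x" by (auto simp: nbhd_def)
    have "nbhd G x = {y}"
    proof
      show "{y} \<subseteq> nbhd G x" using y by (simp add: nbhd_def)
      show "nbhd G x \<subseteq> {y}"
      proof
        fix z assume "z \<in> nbhd G x"
        then have z: "G z x" by (simp add: nbhd_def)
        have "z = x \<or> z = y" using small_V[OF sm tree_finite[OF T], of x y z] x y z CV GC Gi by blast
        then show "z \<in> {y}" using Gi z by blast
      qed
    qed
    then have "leaf C G x" using x by (simp add: leaf_def)
    then show ?thesis by (rule h_leaf)
  qed
qed

lemma small_case:
  fixes V :: "'a set" and E :: "'a \<Rightarrow> 'a \<Rightarrow> bool" and \<chi> :: "'a \<Rightarrow> color"
  assumes T: "tree V E" and sm: "card V \<le> 2"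
  shows "unmixed V E" and
    "\<forall>C \<in> components (interior_set V E \<chi> c) (induced E (interior_set V E \<chi> c)).
        gheight C (induced E C) \<le> 3
      \<and> (\<forall>v \<in> Vk C (induced E C) 2. card (nbhd (induced E C) v \<inter> Vk C (induced E C) 1) = 1)
      \<and> (\<forall>v \<in> Vk C (induced E C) 1. card (nbhd (induced E C) v \<inter> Vk C (induced E C) 2) \<le> 1)"
proof -
  have sg: "simple_graph V E" using T by (rule tree_simple)
  have fV: "finite V" using T by (rule tree_finite)
  have allV: "D = V" if td: "is_TD_set V E D" for D
  proof
    show "D \<subseteq> V" using td by (simp add: is_TD_set_def)
    show "V \<subseteq> D"
    proof
      fix x assume x: "x \<in> V"
      have cov: "\<forall>x\<in>V. \<exists>d\<in>D. E x d" using td TD_iff[OF sg] by blast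
      obtain d where d: "d \<in> D" "E x d" using cov x by blast
      have dV: "d \<in> V" using sg_V2[OF sg d(2)] .
      obtain d' where d': "d' \<in> D" "E d d'" using cov dV by blast
      have "d' \<in> V" using sg_V2[OF sg d'(2)] .
      then have "d' = x \<or> d' = d" using small_V[OF sm fV x dV] sg_irr[OF sg d(2)] by blast
      then show "x \<in> D" using d' sg_irr[OF sg d'(2)] by blast
    qed
  qed
  show "unmixed V E" unfolding unmixed_def minimal_TD_set_def using allV by metis
  show "\<forall>C \<in> components (interior_set V E \<chi> c) (induced E (interior_set V E \<chi> c)).
        gheight C (induced E C) \<le> 3
      \<and> (\<forall>v \<in> Vk C (induced E C) 2. card (nbhd (induced E C) v \<inter> Vk C (induced E C) 1) = 1)
      \<and> (\<forall>v \<in> Vk C (induced E C) 1. card (nbhd (induced E C) v \<inter> Vk C (induced E C) 2) \<le> 1)"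
  proof
    fix C assume C: "C \<in> components (interior_set V E \<chi> c) (induced E (interior_set V E \<chi> c))"
    have IV: "interior_set V E \<chi> c \<subseteq> V" by (auto simp: interior_set_def)
    obtain v where v: "v \<in> interior_set V E \<chi> c" and Cd: "C = {u \<in> interior_set V E \<chi> c.
       (induced (induced E (interior_set V E \<chi> c)) (interior_set V E \<chi> c))\<^sup>*\<^sup>* v u}"
      using C unfolding components_def by blast
    have CV: "C \<subseteq> V" using Cd IV by blast
    have Cne: "C \<noteq> {}" using Cd v by blast
    interpret hg V E C using T CV by unfold_locales
    have h0: "\<And>x. x \<in> C \<Longrightarrow> h x = 0" using small_h0[OF T sm CV] by blast
    have "gheight C G \<le> 3" using gheight_le[OF Cne] h0 by simp
    moreover have "Vk C G 1 = {}" "Vk C G 2 = {}" using h0 by (auto simp: Vk_def)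
    ultimately show "gheight C (induced E C) \<le> 3
      \<and> (\<forall>v \<in> Vk C (induced E C) 2. card (nbhd (induced E C) v \<inter> Vk C (induced E C) 1) = 1)
      \<and> (\<forall>v \<in> Vk C (induced E C) 1. card (nbhd (induced E C) v \<inter> Vk C (induced E C) 2) \<le> 1)" by simp
  qed
qed

theorem theorem3p47:
  fixes V :: "'a set" and E :: "'a \<Rightarrow> 'a \<Rightarrow> bool" and \<chi> :: "'a \<Rightarrow> color"
  assumes "tree V E" and "proper_2_coloring V E \<chi>"
  shows "unmixed V E \<longleftrightarrow>
    (\<forall>c \<in> {Blue, Red}. \<forall>C \<in> components (interior_set V E \<chi> c) (induced E (interior_set V E \<chi> c)).
        gheight C (induced E C) \<le> 3
      \<and> (\<forall>v \<in> Vk C (induced E C) 2. card (nbhd (induced E C) v \<inter> Vk C (induced E C) 1) = 1)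
      \<and> (\<forall>v \<in> Vk C (induced E C) 1. card (nbhd (induced E C) v \<inter> Vk C (induced E C) 2) \<le> 1))"
proof (cases "3 \<le> card V")
  case True
  interpret B: tc V E \<chi> Blue using assms True by unfold_locales
  interpret R: tc V E \<chi> Red using assms True by unfold_locales
  have "unmixed V E \<longleftrightarrow> unmix V E \<chi> Blue \<and> unmix V E \<chi> Red"
    using step1[OF B.sg assms(2) B.fV] B.nbr_ex by blast
  then show ?thesis using B.unmix_iff' R.unmix_iff' by simp
next
  case False
  then have "card V \<le> 2" by simp
  then show ?thesis using small_case[OF assms(1)] by blast
qed

end
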